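(* Let $(V_1,V_2)$ be a pair of commuting isometries on a Hilbert space $\mathcal H$ and $V=V_1V_2$. The following are equivalent: (a) $C(V_1,V_2)=0$; (b) $\ker V_2^*$ is a reducing subspace for $V_1$ and $V_1|_{\ker V_2^*}$ is a unitary; (c) $\ker V_1^*$ is a reducing subspace for $V_2$ and $V_2|_{\ker V_1^*}$ is a unitary; (d) the fringe operators $F_1$ and $F_2$ are unitaries; (e) $\ker V_1^*$ and $\ker V_2^*$ are orthogonal and their direct sum is $\ker V^*$; (f) $(\operatorname{ran}V_1\ominus\operatorname{ran}V)\oplus(\operatorname{ran}V_2\ominus\operatorname{ran}V)\oplus\operatorname{ran}V=\mathcal H$; (g) if $(\mathcal E,P,U)$ is the BCL triple for $(V_1,V_2)$, then $\operatorname{ran}P$ reduces $U$.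
   Context: Defect operator: $C(V_1,V_2)=I-V_1V_1^*-V_2V_2^*+V_1V_2V_2^*V_1^*$. Fringe operators: $F_1:\ker V_1^*\to\ker V_1^*$, $F_1x=P_{\ker V_1^*}V_2x$; $F_2:\ker V_2^*\to\ker V_2^*$, $F_2x=P_{\ker V_2^*}V_1x$. Given a Hilbert space $\mathcal E$, projection $P$ and unitary $U$ on $\mathcal E$, set $P^\perp=I-P$, $\varphi_1(z)=U^*(P^\perp+zP)$, $\varphi_2(z)=(P+zP^\perp)U$. Berger–Coburn–Lebow theorem: for commuting isometries $(V_1,V_2)$ on $\mathcal H$, $\mathcal H=\mathcal H_p\oplus\mathcal H_u$ (jointly reducing), $V_i|_{\mathcal H_u}$ commuting unitaries, and there is a triple $(\mathcal E,P,U)$, unique up to unitary equivalence, with $(V_1|_{\mathcal H_p},V_2|_{\mathcal H_p})$ unitarily equal to the multiplication operators $(M_{\varphi_1},M_{\varphi_2})$ on the Hardy space $H^2_{\mathbb D}(\mathcal E)$ ($\mathcal E\cong\ker V^*$); this is the BCL triple. *)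

theory Defs
  imports "HOL-Analysis.Analysis"
begin

text \<open>A complex inner product space is modelled as a real inner product space
  (the real inner product being the real part of the complex one) together with a
  complex scalar multiplication extending the real one, such that multiplication by
  the imaginary unit is orthogonal. Orthogonality,
  orthogonal complements, orthogonal projections and adjoints of complex-linear
  operators agree with the ones computed from the real part of the inner product.\<close>

class complex_inner = real_inner +
  fixes scaleC :: "complex \<Rightarrow> 'a \<Rightarrow> 'a"
  assumes scaleC_add_right: "scaleC a (x + y) = scaleC a x + scaleC a y"
    and scaleC_add_left: "scaleC (a + b) x = scaleC a x + scaleC b x"
    and scaleC_scaleC: "scaleC a (scaleC b x) = scaleC (a * b) x"
    and scaleC_one: "scaleC 1 x = x"
    and scaleR_scaleC: "scaleR r x = scaleC (complex_of_real r) x"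
    and inner_scaleC_ii: "inner (scaleC \<i> x) (scaleC \<i> y) = inner x y"

class chilbert_space = complex_inner + complete_space

definition cinner :: "'a::complex_inner \<Rightarrow> 'a \<Rightarrow> complex" where
  "cinner x y = Complex (inner x y) (- inner x (scaleC \<i> y))"

definition csubspace :: "'a::complex_inner set \<Rightarrow> bool" where
  "csubspace M \<longleftrightarrow> 0 \<in> M \<and> (\<forall>x\<in>M. \<forall>y\<in>M. x + y \<in> M) \<and> (\<forall>c. \<forall>x\<in>M. scaleC c x \<in> M)"

definition closed_csubspace :: "'a::complex_inner set \<Rightarrow> bool" where
  "closed_csubspace M \<longleftrightarrow> csubspace M \<and> closed M"

definition clinear_on :: "'a::complex_inner set \<Rightarrow> ('a \<Rightarrow> 'b::complex_inner) \<Rightarrow> bool" where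
  "clinear_on M T \<longleftrightarrow> (\<forall>x\<in>M. \<forall>y\<in>M. T (x + y) = T x + T y)
     \<and> (\<forall>c. \<forall>x\<in>M. T (scaleC c x) = scaleC c (T x))"

abbreviation clinear :: "('a::complex_inner \<Rightarrow> 'b::complex_inner) \<Rightarrow> bool" where
  "clinear T \<equiv> clinear_on UNIV T"

definition cisometry :: "('a::complex_inner \<Rightarrow> 'a) \<Rightarrow> bool" where
  "cisometry V \<longleftrightarrow> clinear V \<and> (\<forall>x. norm (V x) = norm x)"

definition adj_on :: "'a::complex_inner set \<Rightarrow> ('a \<Rightarrow> 'a) \<Rightarrow> 'a \<Rightarrow> 'a" where
  "adj_on E T y = (THE z. z \<in> E \<and> (\<forall>x\<in>E. inner z x = inner y (T x)))"

abbreviation adj :: "('a::complex_inner \<Rightarrow> 'a) \<Rightarrow> 'a \<Rightarrow> 'a" where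
  "adj T \<equiv> adj_on UNIV T"

definition ker_op :: "('a \<Rightarrow> 'b::zero) \<Rightarrow> 'a set" where
  "ker_op T = {x. T x = 0}"

definition ocomp :: "'a::real_inner set \<Rightarrow> 'a set" where
  "ocomp M = {x. \<forall>m\<in>M. inner x m = 0}"

definition ominus_sp :: "'a::real_inner set \<Rightarrow> 'a set \<Rightarrow> 'a set" where
  "ominus_sp A B = A \<inter> ocomp B"

definition orth_sets :: "'a::real_inner set \<Rightarrow> 'a set \<Rightarrow> bool" where
  "orth_sets A B \<longleftrightarrow> (\<forall>a\<in>A. \<forall>b\<in>B. inner a b = 0)"

definition ssum :: "'a::plus set \<Rightarrow> 'a set \<Rightarrow> 'a set" where
  "ssum A B = {a + b | a b. a \<in> A \<and> b \<in> B}"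

definition oproj :: "'a::real_inner set \<Rightarrow> 'a \<Rightarrow> 'a" where
  "oproj M x = (THE y. y \<in> M \<and> x - y \<in> ocomp M)"

definition reducing_on :: "'a::complex_inner set \<Rightarrow> 'a set \<Rightarrow> ('a \<Rightarrow> 'a) \<Rightarrow> bool" where
  "reducing_on E M T \<longleftrightarrow> (\<forall>x\<in>M. T x \<in> M) \<and> (\<forall>x\<in>M. adj_on E T x \<in> M)"

abbreviation reducing :: "'a::complex_inner set \<Rightarrow> ('a \<Rightarrow> 'a) \<Rightarrow> bool" where
  "reducing M T \<equiv> reducing_on UNIV M T"

definition unitary_on :: "'a::complex_inner set \<Rightarrow> ('a \<Rightarrow> 'a) \<Rightarrow> bool" where
  "unitary_on M T \<longleftrightarrow> clinear_on M T \<and> T ` M = M \<and> (\<forall>x\<in>M. norm (T x) = norm x)"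

definition orth_proj_on :: "'a::complex_inner set \<Rightarrow> ('a \<Rightarrow> 'a) \<Rightarrow> bool" where
  "orth_proj_on E P \<longleftrightarrow> (\<forall>x\<in>E. P x \<in> E) \<and> clinear_on E P \<and> (\<forall>x\<in>E. P (P x) = P x)
     \<and> (\<forall>x\<in>E. \<forall>y\<in>E. inner (P x) y = inner x (P y))"

definition defect_op :: "('a::complex_inner \<Rightarrow> 'a) \<Rightarrow> ('a \<Rightarrow> 'a) \<Rightarrow> 'a \<Rightarrow> 'a" where
  "defect_op V1 V2 x = x - V1 (adj V1 x) - V2 (adj V2 x) + V1 (V2 (adj V2 (adj V1 x)))"

text \<open>F1 x = P_{ker V1*} V2 x, as an operator on ker V1*.\<close>
definition fringe1 :: "('a::complex_inner \<Rightarrow> 'a) \<Rightarrow> ('a \<Rightarrow> 'a) \<Rightarrow> 'a \<Rightarrow> 'a" where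
  "fringe1 V1 V2 x = oproj (ker_op (adj V1)) (V2 x)"

text \<open>F2 x = P_{ker V2*} V1 x, as an operator on ker V2*.\<close>
definition fringe2 :: "('a::complex_inner \<Rightarrow> 'a) \<Rightarrow> ('a \<Rightarrow> 'a) \<Rightarrow> 'a \<Rightarrow> 'a" where
  "fringe2 V1 V2 x = oproj (ker_op (adj V2)) (V1 x)"

text \<open>The E-valued Hardy space H^2_D(E), represented (via Taylor coefficients,
  a unitary identification) as the space of square-summable E-valued sequences.\<close>
definition hardy2 :: "'a::real_normed_vector set \<Rightarrow> (nat \<Rightarrow> 'a) set" where
  "hardy2 E = {f. (\<forall>n. f n \<in> E) \<and> summable (\<lambda>n. (norm (f n))\<^sup>2)}"

definition l2norm :: "(nat \<Rightarrow> 'a::real_normed_vector) \<Rightarrow> real" where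
  "l2norm f = sqrt (\<Sum>n. (norm (f n))\<^sup>2)"

text \<open>Multiplication by phi1(z) = U*(P^\<perp> + z P), on Taylor coefficients.\<close>
definition M_phi1 :: "'a::complex_inner set \<Rightarrow> ('a \<Rightarrow> 'a) \<Rightarrow> ('a \<Rightarrow> 'a) \<Rightarrow> (nat \<Rightarrow> 'a) \<Rightarrow> nat \<Rightarrow> 'a" where
  "M_phi1 E P U f n = adj_on E U ((f n - P (f n)) + (case n of 0 \<Rightarrow> 0 | Suc m \<Rightarrow> P (f m)))"

text \<open>Multiplication by phi2(z) = (P + z P^\<perp>) U, on Taylor coefficients.\<close>
definition M_phi2 :: "'a::complex_inner set \<Rightarrow> ('a \<Rightarrow> 'a) \<Rightarrow> ('a \<Rightarrow> 'a) \<Rightarrow> (nat \<Rightarrow> 'a) \<Rightarrow> nat \<Rightarrow> 'a" where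
  "M_phi2 E P U f n = P (U (f n)) + (case n of 0 \<Rightarrow> 0 | Suc m \<Rightarrow> U (f m) - P (U (f m)))"

text \<open>(E, P, U) is a BCL triple for (V1, V2): E is a Hilbert space (realised as a closed
  subspace of H, which is no loss since E is isomorphic to ker V*), P an orthogonal
  projection and U a unitary on E, and there is a decomposition H = Hp \<oplus> Hu into
  jointly reducing subspaces with V1, V2 unitary on Hu and (V1|Hp, V2|Hp) unitarily
  equivalent (via W) to (M_phi1, M_phi2) on H^2_D(E).\<close>
definition is_BCL_triple :: "('a::complex_inner \<Rightarrow> 'a) \<Rightarrow> ('a \<Rightarrow> 'a) \<Rightarrow> 'a set \<Rightarrow> ('a \<Rightarrow> 'a) \<Rightarrow> ('a \<Rightarrow> 'a) \<Rightarrow> bool" where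
  "is_BCL_triple V1 V2 E P U \<longleftrightarrow>
     closed_csubspace E \<and> orth_proj_on E P \<and> unitary_on E U \<and>
     (\<exists>Hp Hu (W :: 'a \<Rightarrow> nat \<Rightarrow> 'a).
        closed_csubspace Hp \<and> closed_csubspace Hu \<and> orth_sets Hp Hu \<and> ssum Hp Hu = UNIV \<and>
        reducing Hp V1 \<and> reducing Hp V2 \<and> reducing Hu V1 \<and> reducing Hu V2 \<and>
        unitary_on Hu V1 \<and> unitary_on Hu V2 \<and>
        W ` Hp = hardy2 E \<and> inj_on W Hp \<and>
        (\<forall>x\<in>Hp. \<forall>y\<in>Hp. W (x + y) = (\<lambda>n. W x n + W y n)) \<and>
        (\<forall>c. \<forall>x\<in>Hp. W (scaleC c x) = (\<lambda>n. scaleC c (W x n))) \<and>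
        (\<forall>x\<in>Hp. l2norm (W x) = norm x) \<and>
        (\<forall>x\<in>Hp. W (V1 x) = M_phi1 E P U (W x)) \<and>
        (\<forall>x\<in>Hp. W (V2 x) = M_phi2 E P U (W x)))"

end

theory Submission
  imports Defs
begin

lemma parallelogram:
  fixes a b x :: "'a::real_inner"
  shows "(norm (a - b))\<^sup>2 = 2 * (norm (x - a))\<^sup>2 + 2 * (norm (x - b))\<^sup>2 - 4 * (norm (x - (1/2) *\<^sub>R (a + b)))\<^sup>2"
  unfolding power2_norm_eq_inner
  by (simp add: inner_diff_left inner_diff_right inner_add_left inner_add_right inner_commute algebra_simps)

lemma norm_diff_scale: "(norm (a - t *\<^sub>R b))\<^sup>2 = (norm (a::'a::real_inner))\<^sup>2 - 2 * t * inner a b + t\<^sup>2 * (norm b)\<^sup>2"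
proof -
  have "(norm (a - t *\<^sub>R b))\<^sup>2 = inner (a - t *\<^sub>R b) (a - t *\<^sub>R b)" by (rule power2_norm_eq_inner)
  also have "\<dots> = inner a a - 2 * t * inner a b + t\<^sup>2 * inner b b"
    by (simp add: inner_diff_left inner_diff_right inner_commute power2_eq_square algebra_simps)
  finally show ?thesis by (simp add: power2_norm_eq_inner)
qed

lemma proj_exists:
  fixes M :: "'a::{real_inner, complete_space} set"
  assumes cl: "closed M" and z: "0 \<in> M" and ad: "\<And>x y. x\<in>M \<Longrightarrow> y\<in>M \<Longrightarrow> x+y \<in> M"
    and sc: "\<And>r x. x\<in>M \<Longrightarrow> r *\<^sub>R x \<in> M"
  shows "\<exists>m\<in>M. x - m \<in> ocomp M"
proof -
  define S where "S = (\<lambda>m. (norm (x - m))\<^sup>2) ` M"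
  define D where "D = Inf S"
  have Sne: "S \<noteq> {}" using z S_def by auto
  have Sbd: "bdd_below S" unfolding S_def by (rule bdd_belowI[of _ 0]) auto
  have Dle: "D \<le> (norm (x - y))\<^sup>2" if "y \<in> M" for y
    unfolding D_def using that Sbd S_def by (auto intro: cInf_lower)
  have "\<exists>m\<in>M. (norm (x - m))\<^sup>2 < D + inverse (real (Suc n))" for n
  proof -
    have "Inf S < D + inverse (real (Suc n))" unfolding D_def by simp
    then obtain s where "s \<in> S" "s < D + inverse (real (Suc n))"
      using cInf_lessD[OF Sne] by blast
    then show ?thesis unfolding S_def by auto
  qed
  then obtain m where mM: "\<And>n. m n \<in> M" and mb: "\<And>n. (norm (x - m n))\<^sup>2 < D + inverse (real (Suc n))"
    by metis
  have mid: "D \<le> (norm (x - (1/2) *\<^sub>R (m p + m q)))\<^sup>2" for p q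
    by (rule Dle, intro sc ad mM)
  have dist_b: "(dist (m p) (m q))\<^sup>2 \<le> 2 * inverse (real (Suc p)) + 2 * inverse (real (Suc q))" for p q
  proof -
    have "(dist (m p) (m q))\<^sup>2 = 2 * (norm (x - m p))\<^sup>2 + 2 * (norm (x - m q))\<^sup>2 - 4 * (norm (x - (1/2) *\<^sub>R (m p + m q)))\<^sup>2"
      unfolding dist_norm by (rule parallelogram)
    then show ?thesis using mb[of p] mb[of q] mid[of p q] by linarith
  qed
  have "Cauchy m"
  proof (rule metric_CauchyI)
    fix e :: real assume e: "0 < e"
    then have "0 < e\<^sup>2 / 4" by simp
    then obtain N where N: "inverse (real (Suc N)) < e\<^sup>2 / 4" using reals_Archimedean by blast
    show "\<exists>M. \<forall>p\<ge>M. \<forall>q\<ge>M. dist (m p) (m q) < e"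
    proof (intro exI allI impI)
      fix p q assume p: "N \<le> p" and q: "N \<le> q"
      have ip: "inverse (real (Suc p)) \<le> inverse (real (Suc N))"
        using p by (simp add: le_imp_inverse_le)
      have iq: "inverse (real (Suc q)) \<le> inverse (real (Suc N))"
        using q by (simp add: le_imp_inverse_le)
      have "(dist (m p) (m q))\<^sup>2 < e\<^sup>2" using dist_b[of p q] ip iq N by linarith
      then show "dist (m p) (m q) < e"
        using e power2_less_imp_less by fastforce
    qed
  qed
  then obtain m0 where lim: "m \<longlonglongrightarrow> m0" using Cauchy_convergent_iff convergent_def by blast
  have m0M: "m0 \<in> M" using closed_sequentially[OF cl _ lim] mM by blast
  have "(\<lambda>n. (norm (x - m n))\<^sup>2) \<longlonglongrightarrow> (norm (x - m0))\<^sup>2"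
    by (intro tendsto_intros lim)
  moreover have "(\<lambda>n. D + inverse (real (Suc n))) \<longlonglongrightarrow> D + 0"
    by (intro tendsto_intros LIMSEQ_inverse_real_of_nat)
  ultimately have m0D: "(norm (x - m0))\<^sup>2 \<le> D"
    using LIMSEQ_le[of _ _ "\<lambda>n. D + inverse (real (Suc n))"] mb by (simp add: less_imp_le)
  have "inner (x - m0) y = 0" if yM: "y \<in> M" for y
  proof (cases "y = 0")
    case True then show ?thesis by simp
  next
    case False
    define t where "t = inner (x - m0) y / (norm y)\<^sup>2"
    have "m0 + t *\<^sub>R y \<in> M" by (intro ad sc m0M yM)
    then have "D \<le> (norm (x - (m0 + t *\<^sub>R y)))\<^sup>2" by (rule Dle)
    also have "x - (m0 + t *\<^sub>R y) = (x - m0) - t *\<^sub>R y" by simp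
    also have "(norm ((x - m0) - t *\<^sub>R y))\<^sup>2 = (norm (x - m0))\<^sup>2 - 2 * t * inner (x - m0) y + t\<^sup>2 * (norm y)\<^sup>2"
      by (simp add: norm_diff_scale)
    also have "t\<^sup>2 * (norm y)\<^sup>2 = t * inner (x - m0) y"
      using False by (simp add: t_def power2_eq_square)
    finally have "t * inner (x - m0) y \<le> 0" using m0D by linarith
    then have "(inner (x - m0) y)\<^sup>2 / (norm y)\<^sup>2 \<le> 0" by (simp add: t_def power2_eq_square)
    moreover have "(norm y)\<^sup>2 > 0" using False by simp
    ultimately have "(inner (x - m0) y)\<^sup>2 \<le> 0" by (simp add: divide_le_0_iff)
    then show ?thesis by simp
  qed
  then show ?thesis using m0M unfolding ocomp_def by blast
qed

lemma scaleC_zero_right: "scaleC c (0::'a::complex_inner) = 0"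
  by (metis add_cancel_right_right scaleC_add_right)

lemma scaleC_decomp: "scaleC c (x::'a::complex_inner) = Re c *\<^sub>R x + Im c *\<^sub>R scaleC \<i> x"
proof -
  have "c = complex_of_real (Re c) + complex_of_real (Im c) * \<i>"
    by (simp add: complex_eq_iff)
  then have "scaleC c x = scaleC (complex_of_real (Re c)) x + scaleC (complex_of_real (Im c)) (scaleC \<i> x)"
    by (metis scaleC_add_left scaleC_scaleC)
  then show ?thesis by (simp add: scaleR_scaleC)
qed

lemma scaleC_ii_ii: "scaleC \<i> (scaleC \<i> x) = - (x::'a::complex_inner)"
  by (metis scaleC_scaleC scaleR_scaleC scaleR_minus1_left complex_i_mult_minus of_real_1 of_real_minus scaleC_one)

lemma inner_scaleC_i_left: "inner (scaleC \<i> x) (y::'a::complex_inner) = - inner x (scaleC \<i> y)"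
proof -
  have "inner (scaleC \<i> x) y = inner (scaleC \<i> (scaleC \<i> x)) (scaleC \<i> y)"
    by (simp add: inner_scaleC_ii)
  then show ?thesis by (simp add: scaleC_ii_ii)
qed

lemma scaleC_minus1: "scaleC (-1) x = - (x::'a::complex_inner)"
  by (metis scaleR_scaleC scaleR_minus1_left of_real_1 of_real_minus)

lemma csubspace_diff: "csubspace M \<Longrightarrow> x \<in> M \<Longrightarrow> y \<in> M \<Longrightarrow> x - y \<in> M"
  unfolding csubspace_def by (metis scaleC_minus1 diff_conv_add_uminus)

lemma csubspace_scaleR: "csubspace M \<Longrightarrow> x \<in> M \<Longrightarrow> r *\<^sub>R x \<in> M"
  unfolding csubspace_def by (simp add: scaleR_scaleC)

lemma clin_add: "clinear T \<Longrightarrow> T (x + y) = T x + T y"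
  unfolding clinear_on_def by blast
lemma clin_scaleC: "clinear T \<Longrightarrow> T (scaleC c x) = scaleC c (T x)"
  unfolding clinear_on_def by blast
lemma clin_scaleR: "clinear T \<Longrightarrow> T (r *\<^sub>R x) = r *\<^sub>R T x"
  by (simp add: clin_scaleC scaleR_scaleC)
lemma clin_zero: "clinear T \<Longrightarrow> T 0 = 0"
  by (metis add_cancel_right_right add_0 clin_add)
lemma clin_minus: "clinear T \<Longrightarrow> T (- x) = - T x"
  by (metis scaleR_minus1_left clin_scaleR)
lemma clin_diff: "clinear T \<Longrightarrow> T (x - y) = T x - T y"
  by (metis diff_conv_add_uminus clin_add clin_minus)
lemma clin_linear: "clinear T \<Longrightarrow> linear T"
  by (rule linearI) (simp_all add: clin_add clin_scaleR)
lemma clin_comp: "clinear A \<Longrightarrow> clinear B \<Longrightarrow> clinear (A \<circ> B)"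
  unfolding clinear_on_def by simp
lemma clin_on_sub: "clinear T \<Longrightarrow> clinear_on M T"
  unfolding clinear_on_def by blast


lemma polar: "inner x y = ((norm (x + y))\<^sup>2 - (norm x)\<^sup>2 - (norm (y::'a::real_inner))\<^sup>2) / 2"
  unfolding power2_norm_eq_inner by (simp add: inner_add_left inner_add_right inner_commute)

lemma iso_clin: "cisometry V \<Longrightarrow> clinear V"
  unfolding cisometry_def by blast
lemma iso_norm: "cisometry V \<Longrightarrow> norm (V x) = norm x"
  unfolding cisometry_def by blast
lemma iso_inner: "cisometry V \<Longrightarrow> inner (V x) (V y) = inner x y"
proof -
  assume V: "cisometry V"
  have "inner (V x) (V y) = ((norm (V x + V y))\<^sup>2 - (norm (V x))\<^sup>2 - (norm (V y))\<^sup>2) / 2" by (rule polar)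
  also have "V x + V y = V (x + y)" by (simp add: clin_add[OF iso_clin[OF V]])
  finally show ?thesis by (simp add: iso_norm[OF V] polar[of x y])
qed
lemma iso_comp: "cisometry A \<Longrightarrow> cisometry B \<Longrightarrow> cisometry (A \<circ> B)"
  unfolding cisometry_def using clin_comp by auto
lemma iso_bl: "cisometry V \<Longrightarrow> bounded_linear V"
  by (rule bounded_linear_intro[where K=1]) (simp_all add: clin_add clin_scaleR iso_clin iso_norm)
lemma iso_inj: "cisometry V \<Longrightarrow> V x = V y \<Longrightarrow> x = y"
proof -
  assume V: "cisometry V" and e: "V x = V y"
  have "norm (x - y) = norm (V (x - y))" using iso_norm[OF V] by simp
  also have "\<dots> = 0" using e by (simp add: clin_diff[OF iso_clin[OF V]])
  finally show ?thesis by simp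
qed

lemma iso_range_closed:
  fixes V :: "'a::{complex_inner,complete_space} \<Rightarrow> 'a"
  assumes V: "cisometry V" shows "closed (range V)"
proof (rule closed_sequential_limits[THEN iffD2], intro allI impI, elim conjE)
  fix x l assume xr: "\<forall>n. x n \<in> range V" and lim: "x \<longlonglongrightarrow> l"
  have "\<forall>n. \<exists>w. x n = V w" using xr by blast
  then obtain z where z: "\<And>n. x n = V (z n)" by metis
  have "Cauchy x" using lim by (rule LIMSEQ_imp_Cauchy)
  moreover have "dist (z m) (z n) = dist (x m) (x n)" for m n
    by (simp add: z dist_norm clin_diff[OF iso_clin[OF V], symmetric] iso_norm[OF V])
  ultimately have "Cauchy z" unfolding Cauchy_def by simp
  then obtain z0 where "z \<longlonglongrightarrow> z0" using Cauchy_convergent_iff convergent_def by blast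
  then have "(\<lambda>n. V (z n)) \<longlonglongrightarrow> V z0" by (rule bounded_linear.tendsto[OF iso_bl[OF V]])
  moreover have "x = (\<lambda>n. V (z n))" using z by auto
  ultimately have "x \<longlonglongrightarrow> V z0" by simp
  then have "l = V z0" using lim LIMSEQ_unique by blast
  then show "l \<in> range V" by simp
qed

lemma range_subspace_proj:
  fixes V :: "'a::{complex_inner,complete_space} \<Rightarrow> 'a"
  assumes V: "cisometry V" shows "\<exists>z. y - V z \<in> ocomp (range V)"
proof -
  have "\<exists>m\<in>range V. y - m \<in> ocomp (range V)"
  proof (rule proj_exists[OF iso_range_closed[OF V]])
    have "V 0 = 0" by (rule clin_zero[OF iso_clin[OF V]])
    then show "0 \<in> range V" by (metis rangeI)
  next
    fix a b assume "a \<in> range V" "b \<in> range V"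
    then obtain a' b' where "a = V a'" "b = V b'" by blast
    then have "a + b = V (a' + b')" by (simp add: clin_add[OF iso_clin[OF V]])
    then show "a + b \<in> range V" by simp
  next
    fix r a assume "a \<in> range V"
    then obtain a' where "a = V a'" by blast
    then have "r *\<^sub>R a = V (r *\<^sub>R a')" by (simp add: clin_scaleR[OF iso_clin[OF V]])
    then show "r *\<^sub>R a \<in> range V" by simp
  qed
  then show ?thesis by blast
qed

lemma adj_on_unique:
  assumes "z \<in> E" "\<forall>x\<in>E. inner z x = inner y (T x)" "\<forall>a\<in>E. \<forall>b\<in>E. a - b \<in> E"
  shows "adj_on E T y = z"
  unfolding adj_on_def
proof (rule the_equality)
  show "z \<in> E \<and> (\<forall>x\<in>E. inner z x = inner y (T x))" using assms by blast
  fix w assume w: "w \<in> E \<and> (\<forall>x\<in>E. inner w x = inner y (T x))"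
  then have "w - z \<in> E" using assms by blast
  then have "inner (w - z) (w - z) = 0" using w assms by (simp add: inner_diff_left)
  then show "w = z" by simp
qed

lemma adj_unique: "(\<forall>x. inner z x = inner y (T x)) \<Longrightarrow> adj T y = z"
  by (rule adj_on_unique) auto

lemma adj_char:
  fixes V :: "'a::chilbert_space \<Rightarrow> 'a"
  assumes V: "cisometry V" shows "inner (adj V y) x = inner y (V x)"
proof -
  obtain z where z: "y - V z \<in> ocomp (range V)" using range_subspace_proj[OF V] by blast
  have "\<forall>x. inner z x = inner y (V x)"
  proof
    fix x
    have "inner (y - V z) (V x) = 0" using z unfolding ocomp_def by blast
    then show "inner z x = inner y (V x)" by (simp add: inner_diff_left iso_inner[OF V])
  qed
  then have "adj V y = z" by (rule adj_unique)
  then show ?thesis using \<open>\<forall>x. inner z x = inner y (V x)\<close> by simp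
qed

context
  fixes V :: "'a::chilbert_space \<Rightarrow> 'a"
  assumes V: "cisometry V"
begin

lemma adj_VV: "adj V (V x) = x"
  by (rule adj_unique) (simp add: iso_inner[OF V])

lemma adj_add: "adj V (a + b) = adj V a + adj V b"
  by (rule adj_unique) (simp add: inner_add_left adj_char[OF V])
lemma adj_scaleR: "adj V (r *\<^sub>R a) = r *\<^sub>R adj V a"
  by (rule adj_unique) (simp add: adj_char[OF V])
lemma adj_zero: "adj V 0 = 0"
  by (rule adj_unique) simp
lemma adj_diff: "adj V (a - b) = adj V a - adj V b"
  by (rule adj_unique) (simp add: inner_diff_left adj_char[OF V])
lemma adj_ii: "adj V (scaleC \<i> a) = scaleC \<i> (adj V a)"
  by (rule adj_unique) (simp add: inner_scaleC_i_left adj_char[OF V] clin_scaleC[OF iso_clin[OF V]])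
lemma adj_scaleC: "adj V (scaleC c a) = scaleC c (adj V a)"
  by (simp add: scaleC_decomp[of c] adj_add adj_scaleR adj_ii)
lemma adj_clin: "clinear (adj V)"
  unfolding clinear_on_def by (simp add: adj_add adj_scaleC)

lemma adj_norm_le: "norm (adj V y) \<le> norm y"
proof -
  have "(norm (adj V y))\<^sup>2 = inner y (V (adj V y))"
    by (simp add: power2_norm_eq_inner adj_char[OF V])
  also have "\<dots> \<le> norm y * norm (V (adj V y))" by (rule norm_cauchy_schwarz)
  also have "\<dots> = norm y * norm (adj V y)" by (simp add: iso_norm[OF V])
  finally have "norm (adj V y) * norm (adj V y) \<le> norm y * norm (adj V y)" by (simp add: power2_eq_square)
  then show ?thesis
  proof (cases "norm (adj V y) = 0")
    case False then show ?thesis using \<open>norm (adj V y) * norm (adj V y) \<le> norm y * norm (adj V y)\<close>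
      using mult_right_le_imp_le[of "norm (adj V y)" "norm y" "norm (adj V y)"] by simp
  qed simp
qed

lemma adj_bl: "bounded_linear (adj V)"
  by (rule bounded_linear_intro[where K=1]) (simp_all add: adj_add adj_scaleR adj_norm_le)

lemma ker_adj: "ker_op (adj V) = ocomp (range V)"
proof -
  have "adj V y = 0 \<longleftrightarrow> (\<forall>x. inner y (V x) = 0)" for y
  proof
    assume "adj V y = 0" then show "\<forall>x. inner y (V x) = 0" by (metis adj_char[OF V] inner_zero_left)
  next
    assume "\<forall>x. inner y (V x) = 0"
    then have "inner (adj V y) (adj V y) = 0" by (simp add: adj_char[OF V])
    then show "adj V y = 0" by simp
  qed
  then show ?thesis unfolding ker_op_def ocomp_def by auto
qed

lemma ker_adjI: "(\<forall>x. inner y (V x) = 0) \<Longrightarrow> adj V y = 0"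
  using ker_adj unfolding ker_op_def ocomp_def by auto
lemma ker_adjD: "adj V y = 0 \<Longrightarrow> inner y (V x) = 0"
  by (metis adj_char[OF V] inner_zero_left)

lemma VVadj_perp: "inner (y - V (adj V y)) (V x) = 0"
  by (simp add: inner_diff_left iso_inner[OF V] adj_char[OF V])

lemma QV_ker: "adj V (y - V (adj V y)) = 0"
  by (simp add: adj_diff adj_VV)

lemma norm_split: "(norm y)\<^sup>2 = (norm (y - V (adj V y)))\<^sup>2 + (norm (adj V y))\<^sup>2"
proof -
  have "y = (y - V (adj V y)) + V (adj V y)" by simp
  then have "(norm y)\<^sup>2 = (norm ((y - V (adj V y)) + V (adj V y)))\<^sup>2" by simp
  also have "\<dots> = (norm (y - V (adj V y)))\<^sup>2 + (norm (V (adj V y)))\<^sup>2"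
    by (rule norm_add_Pythagorean) (unfold orthogonal_def, rule VVadj_perp)
  finally show ?thesis by (simp add: iso_norm[OF V])
qed

end

lemma adj_comp:
  fixes A B :: "'a::chilbert_space \<Rightarrow> 'a"
  assumes "cisometry A" "cisometry B"
  shows "adj (A \<circ> B) y = adj B (adj A y)"
  by (rule adj_unique) (simp add: adj_char assms)

lemma csubspace_ker: "clinear T \<Longrightarrow> csubspace (ker_op T)"
  unfolding csubspace_def ker_op_def by (simp add: clin_zero clin_add clin_scaleC scaleC_zero_right)

lemma ocomp_diff: "a \<in> ocomp M \<Longrightarrow> b \<in> ocomp M \<Longrightarrow> a - b \<in> ocomp M"
  unfolding ocomp_def by (simp add: inner_diff_left)

lemma oproj_eq:
  assumes "csubspace M" "y \<in> M" "x - y \<in> ocomp M"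
  shows "oproj M x = y"
  unfolding oproj_def
proof (rule the_equality)
  show "y \<in> M \<and> x - y \<in> ocomp M" using assms by blast
  fix w assume w: "w \<in> M \<and> x - w \<in> ocomp M"
  have "w - y \<in> M" using w assms csubspace_diff by blast
  moreover have "w - y \<in> ocomp M"
    using ocomp_diff[OF assms(3), of "x - w"] w by simp
  ultimately have "inner (w - y) (w - y) = 0" unfolding ocomp_def by blast
  then show "w = y" by simp
qed

locale cpair =
  fixes V1 V2 :: "'a::chilbert_space \<Rightarrow> 'a"
  assumes i1: "cisometry V1" and i2: "cisometry V2" and comm: "V1 \<circ> V2 = V2 \<circ> V1"
begin

lemma iV: "cisometry (V1 \<circ> V2)" by (rule iso_comp[OF i1 i2])
lemma comm_pt: "V1 (V2 x) = V2 (V1 x)" using comm by (metis comp_apply)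
lemma adjV: "adj (V1 \<circ> V2) y = adj V2 (adj V1 y)" by (rule adj_comp[OF i1 i2])
lemma adjV': "adj (V1 \<circ> V2) y = adj V1 (adj V2 y)" unfolding comm by (rule adj_comp[OF i2 i1])
lemma adj_comm: "adj V2 (adj V1 y) = adj V1 (adj V2 y)" using adjV adjV' by simp

lemma sym: "cpair V2 V1" by (unfold_locales) (use i1 i2 comm in auto)

lemma K1_iff: "x \<in> ker_op (adj V1) \<longleftrightarrow> adj V1 x = 0" by (simp add: ker_op_def)
lemma K2_iff: "x \<in> ker_op (adj V2) \<longleftrightarrow> adj V2 x = 0" by (simp add: ker_op_def)

lemma V2adj_K1: "adj V1 k = 0 \<Longrightarrow> adj V1 (adj V2 k) = 0"
  by (simp add: adj_comm[symmetric] adj_zero[OF i2])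

lemma Q1_K1: "adj V1 (y - V1 (adj V1 y)) = 0" by (rule QV_ker[OF i1])

lemma cs1: "csubspace (ker_op (adj V1))" by (rule csubspace_ker[OF adj_clin[OF i1]])

lemma defect_eq: "defect_op V1 V2 x = (x - V1 (adj V1 x)) - V2 ((adj V2 x) - V1 (adj V1 (adj V2 x)))"
proof -
  have "V2 (V1 (adj V1 (adj V2 x))) = V1 (V2 (adj V2 (adj V1 x)))"
    by (simp add: comm_pt adj_comm)
  then show ?thesis unfolding defect_op_def
    by (simp add: clin_diff[OF iso_clin[OF i2]] algebra_simps)
qed

lemma defect_sym: "defect_op V2 V1 = defect_op V1 V2"
  unfolding defect_op_def by (rule ext) (simp add: comm_pt adj_comm algebra_simps)

lemma key1: "defect_op V1 V2 = (\<lambda>_. 0) \<longleftrightarrow> V2 ` ker_op (adj V1) = ker_op (adj V1)"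
proof
  assume D: "defect_op V1 V2 = (\<lambda>_. 0)"
  have D': "x - V1 (adj V1 x) = V2 ((adj V2 x) - V1 (adj V1 (adj V2 x)))" for x
    using fun_cong[OF D, of x] by (simp add: defect_eq)
  show "V2 ` ker_op (adj V1) = ker_op (adj V1)"
  proof
    show "V2 ` ker_op (adj V1) \<subseteq> ker_op (adj V1)"
    proof
      fix y assume "y \<in> V2 ` ker_op (adj V1)"
      then obtain k where k: "adj V1 k = 0" "y = V2 k" by (auto simp: K1_iff)
      have "V2 k - V1 (adj V1 (V2 k)) = V2 (k - V1 (adj V1 k))" using D'[of "V2 k"] by (simp add: adj_VV[OF i2])
      also have "\<dots> = V2 k" using k by (simp add: clin_zero[OF iso_clin[OF i1]])
      finally have "V2 k = V2 k - V1 (adj V1 (V2 k))" by simp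
      then show "y \<in> ker_op (adj V1)" using Q1_K1[of "V2 k"] k by (simp add: K1_iff)
    qed
  next
    show "ker_op (adj V1) \<subseteq> V2 ` ker_op (adj V1)"
    proof
      fix k assume "k \<in> ker_op (adj V1)"
      then have k: "adj V1 k = 0" by (simp add: K1_iff)
      have "k = V2 ((adj V2 k) - V1 (adj V1 (adj V2 k)))" using D'[of k] k by (simp add: clin_zero[OF iso_clin[OF i1]])
      moreover have "(adj V2 k) - V1 (adj V1 (adj V2 k)) \<in> ker_op (adj V1)" using Q1_K1 by (simp add: K1_iff)
      ultimately show "k \<in> V2 ` ker_op (adj V1)" by blast
    qed
  qed
next
  assume E: "V2 ` ker_op (adj V1) = ker_op (adj V1)"
  show "defect_op V1 V2 = (\<lambda>_. 0)"
  proof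
    fix x
    define a where "a = x - V1 (adj V1 x)"
    define b where "b = V2 ((adj V2 x) - V1 (adj V1 (adj V2 x)))"
    have aK: "a \<in> ker_op (adj V1)" unfolding a_def K1_iff by (rule Q1_K1)
    have bK: "b \<in> ker_op (adj V1)" unfolding b_def using E Q1_K1 K1_iff by blast
    have orth: "inner (a - b) k = 0" if kK: "k \<in> ker_op (adj V1)" for k
    proof -
      obtain w where w: "adj V1 w = 0" "k = V2 w" using kK E by (metis K1_iff imageE)
      have k0: "adj V1 k = 0" using kK K1_iff by blast
      have "inner (x - a) k = 0" unfolding a_def using ker_adjD[OF i1 k0] by (simp add: inner_commute)
      moreover have "inner (x - b) k = 0"
      proof -
        have "inner b (V2 w) = inner ((adj V2 x) - V1 (adj V1 (adj V2 x))) w"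
          unfolding b_def by (rule iso_inner[OF i2])
        also have "\<dots> = inner (adj V2 x) w - inner (V1 (adj V1 (adj V2 x))) w" by (rule inner_diff_left)
        also have "inner (V1 (adj V1 (adj V2 x))) w = 0"
          using ker_adjD[OF i1 w(1)] by (simp add: inner_commute)
        finally have "inner b (V2 w) = inner x (V2 w)" by (simp add: adj_char[OF i2])
        then show ?thesis using w by (simp add: inner_diff_left)
      qed
      ultimately show ?thesis by (simp add: inner_diff_left inner_diff_right algebra_simps)
    qed
    have "a - b \<in> ker_op (adj V1)" using aK bK cs1 csubspace_diff by blast
    then have "inner (a - b) (a - b) = 0" by (rule orth)
    then have "a = b" by simp
    then show "defect_op V1 V2 x = 0" by (simp add: defect_eq a_def b_def)
  qed
qed

lemma key_c: "V2 ` ker_op (adj V1) = ker_op (adj V1) \<longleftrightarrow>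
   reducing (ker_op (adj V1)) V2 \<and> unitary_on (ker_op (adj V1)) V2"
proof
  assume E: "V2 ` ker_op (adj V1) = ker_op (adj V1)"
  have "reducing (ker_op (adj V1)) V2"
    unfolding reducing_on_def using E V2adj_K1 K1_iff by blast
  moreover have "unitary_on (ker_op (adj V1)) V2"
    unfolding unitary_on_def using E clin_on_sub[OF iso_clin[OF i2]] iso_norm[OF i2] by blast
  ultimately show "reducing (ker_op (adj V1)) V2 \<and> unitary_on (ker_op (adj V1)) V2" by blast
next
  assume "reducing (ker_op (adj V1)) V2 \<and> unitary_on (ker_op (adj V1)) V2"
  then show "V2 ` ker_op (adj V1) = ker_op (adj V1)" unfolding unitary_on_def by blast
qed

lemma oproj_K1: "oproj (ker_op (adj V1)) y = y - V1 (adj V1 y)"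
proof (rule oproj_eq[OF cs1])
  show "y - V1 (adj V1 y) \<in> ker_op (adj V1)" using Q1_K1 K1_iff by blast
  show "y - (y - V1 (adj V1 y)) \<in> ocomp (ker_op (adj V1))"
    unfolding ocomp_def using ker_adjD[OF i1] K1_iff by (simp add: inner_commute)
qed

lemma key_d: "V2 ` ker_op (adj V1) = ker_op (adj V1) \<longleftrightarrow> unitary_on (ker_op (adj V1)) (fringe1 V1 V2)"
proof
  assume E: "V2 ` ker_op (adj V1) = ker_op (adj V1)"
  have F: "fringe1 V1 V2 k = V2 k" if "k \<in> ker_op (adj V1)" for k
  proof -
    have "adj V1 (V2 k) = 0" using E that K1_iff by blast
    then show ?thesis unfolding fringe1_def oproj_K1 by (simp add: clin_zero[OF iso_clin[OF i1]])
  qed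
  have cl: "clinear_on (ker_op (adj V1)) (fringe1 V1 V2)"
    unfolding clinear_on_def
  proof (intro conjI ballI allI)
    fix x y assume "x \<in> ker_op (adj V1)" "y \<in> ker_op (adj V1)"
    moreover then have "x + y \<in> ker_op (adj V1)" using cs1 unfolding csubspace_def by blast
    ultimately show "fringe1 V1 V2 (x + y) = fringe1 V1 V2 x + fringe1 V1 V2 y"
      by (simp add: F clin_add[OF iso_clin[OF i2]])
  next
    fix c x assume "x \<in> ker_op (adj V1)"
    moreover then have "scaleC c x \<in> ker_op (adj V1)" using cs1 unfolding csubspace_def by blast
    ultimately show "fringe1 V1 V2 (scaleC c x) = scaleC c (fringe1 V1 V2 x)"
      by (simp add: F clin_scaleC[OF iso_clin[OF i2]])
  qed
  have "fringe1 V1 V2 ` ker_op (adj V1) = V2 ` ker_op (adj V1)" using F by (rule image_cong[OF refl])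
  then show "unitary_on (ker_op (adj V1)) (fringe1 V1 V2)"
    unfolding unitary_on_def using cl E F iso_norm[OF i2] by simp
next
  assume U: "unitary_on (ker_op (adj V1)) (fringe1 V1 V2)"
  have in1: "adj V1 (V2 k) = 0" if "k \<in> ker_op (adj V1)" for k
  proof -
    have "norm (fringe1 V1 V2 k) = norm k" using U that unfolding unitary_on_def by blast
    then have "norm (V2 k - V1 (adj V1 (V2 k))) = norm (V2 k)" by (simp add: fringe1_def oproj_K1 iso_norm[OF i2])
    then have "(norm (adj V1 (V2 k)))\<^sup>2 = 0" using norm_split[OF i1, of "V2 k"] by simp
    then show ?thesis by simp
  qed
  have F: "fringe1 V1 V2 k = V2 k" if "k \<in> ker_op (adj V1)" for k
    unfolding fringe1_def oproj_K1 using in1[OF that] by (simp add: clin_zero[OF iso_clin[OF i1]])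
  have "fringe1 V1 V2 ` ker_op (adj V1) = V2 ` ker_op (adj V1)" using F by (rule image_cong[OF refl])
  then show "V2 ` ker_op (adj V1) = ker_op (adj V1)" using U unfolding unitary_on_def by simp
qed

end

context cpair begin

lemma cs2: "csubspace (ker_op (adj V2))" by (rule csubspace_ker[OF adj_clin[OF i2]])

lemma e_fwd:
  assumes E1: "V2 ` ker_op (adj V1) = ker_op (adj V1)" and E2: "V1 ` ker_op (adj V2) = ker_op (adj V2)"
  shows "orth_sets (ker_op (adj V1)) (ker_op (adj V2)) \<and>
         ssum (ker_op (adj V1)) (ker_op (adj V2)) = ker_op (adj (V1 \<circ> V2))"
proof
  show "orth_sets (ker_op (adj V1)) (ker_op (adj V2))"
    unfolding orth_sets_def
  proof (intro ballI)
    fix a b assume a: "a \<in> ker_op (adj V1)" and b: "b \<in> ker_op (adj V2)"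
    obtain w where "a = V2 w" using a E1 by (metis imageE)
    then show "inner a b = 0" using ker_adjD[OF i2, of b w] b K2_iff by (simp add: inner_commute)
  qed
  show "ssum (ker_op (adj V1)) (ker_op (adj V2)) = ker_op (adj (V1 \<circ> V2))"
  proof
    show "ssum (ker_op (adj V1)) (ker_op (adj V2)) \<subseteq> ker_op (adj (V1 \<circ> V2))"
    proof
      fix y assume "y \<in> ssum (ker_op (adj V1)) (ker_op (adj V2))"
      then obtain a b where ab: "adj V1 a = 0" "adj V2 b = 0" "y = a + b" unfolding ssum_def ker_op_def by blast
      have "adj (V1 \<circ> V2) a = 0" using ab(1) adjV[of a] adj_zero[OF i2] by simp
      moreover have "adj (V1 \<circ> V2) b = 0" using ab(2) adjV'[of b] adj_zero[OF i1] by simp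
      ultimately have "adj (V1 \<circ> V2) y = 0" using ab(3) adj_add[OF iV, of a b] by simp
      then show "y \<in> ker_op (adj (V1 \<circ> V2))" by (simp add: ker_op_def)
    qed
  next
    show "ker_op (adj (V1 \<circ> V2)) \<subseteq> ssum (ker_op (adj V1)) (ker_op (adj V2))"
    proof
      fix x assume "x \<in> ker_op (adj (V1 \<circ> V2))"
      then have x0: "adj V2 (adj V1 x) = 0" by (simp add: ker_op_def adjV del: comp_apply)
      have "V1 (adj V1 x) \<in> ker_op (adj V2)" using E2 x0 K2_iff by blast
      moreover have "x - V1 (adj V1 x) \<in> ker_op (adj V1)" using Q1_K1 K1_iff by blast
      ultimately show "x \<in> ssum (ker_op (adj V1)) (ker_op (adj V2))"
        unfolding ssum_def by (intro CollectI exI[of _ "x - V1 (adj V1 x)"] exI[of _ "V1 (adj V1 x)"]) simp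
    qed
  qed
qed

lemma e_bwd:
  assumes O: "orth_sets (ker_op (adj V1)) (ker_op (adj V2))"
    and S: "ssum (ker_op (adj V1)) (ker_op (adj V2)) = ker_op (adj (V1 \<circ> V2))"
  shows "V2 ` ker_op (adj V1) = ker_op (adj V1)"
proof
  show "V2 ` ker_op (adj V1) \<subseteq> ker_op (adj V1)"
  proof
    fix y assume "y \<in> V2 ` ker_op (adj V1)"
    then obtain k where k: "adj V1 k = 0" "y = V2 k" by (auto simp: K1_iff)
    have "adj (V1 \<circ> V2) (V2 k) = 0" by (simp add: adjV' adj_VV[OF i2] k del: comp_apply)
    then have "V2 k \<in> ssum (ker_op (adj V1)) (ker_op (adj V2))" using S by (simp add: ker_op_def)
    then obtain a b where ab: "a \<in> ker_op (adj V1)" "b \<in> ker_op (adj V2)" "V2 k = a + b"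
      unfolding ssum_def by blast
    have "inner b b = inner (V2 k) b - inner a b" using ab(3) by (simp add: inner_add_left)
    also have "inner a b = 0" using O ab unfolding orth_sets_def by blast
    also have "inner (V2 k) b = 0" using ker_adjD[OF i2, of b k] ab(2) K2_iff by (simp add: inner_commute)
    finally have "b = 0" by simp
    then show "y \<in> ker_op (adj V1)" using ab k by simp
  qed
next
  show "ker_op (adj V1) \<subseteq> V2 ` ker_op (adj V1)"
  proof
    fix k assume kK: "k \<in> ker_op (adj V1)"
    define q where "q = k - V2 (adj V2 k)"
    have qK: "q \<in> ker_op (adj V2)" unfolding q_def using QV_ker[OF i2] K2_iff by blast
    have "inner k q = 0" using O kK qK unfolding orth_sets_def by blast
    moreover have "inner (V2 (adj V2 k)) q = 0" using ker_adjD[OF i2] qK K2_iff by (simp add: inner_commute)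
    ultimately have "inner q q = 0" unfolding q_def by (simp add: inner_diff_left)
    then have "k = V2 (adj V2 k)" unfolding q_def by simp
    moreover have "adj V2 k \<in> ker_op (adj V1)" using V2adj_K1 kK K1_iff by blast
    ultimately show "k \<in> V2 ` ker_op (adj V1)" by blast
  qed
qed

lemma A_eq: "ominus_sp (range V1) (range (V1 \<circ> V2)) = V1 ` ker_op (adj V2)"
proof -
  have "V1 y \<in> ocomp (range (V1 \<circ> V2)) \<longleftrightarrow> adj V2 y = 0" for y
  proof -
    have "V1 y \<in> ocomp (range (V1 \<circ> V2)) \<longleftrightarrow> (\<forall>z. inner y (V2 z) = 0)"
      unfolding ocomp_def by (simp add: iso_inner[OF i1])
    also have "\<dots> \<longleftrightarrow> adj V2 y = 0" using ker_adjI[OF i2] ker_adjD[OF i2] by blast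
    finally show ?thesis .
  qed
  then show ?thesis unfolding ominus_sp_def ker_op_def by auto
qed

lemma Aperp: "orth_sets (ominus_sp X Y) Y"
  unfolding orth_sets_def ominus_sp_def ocomp_def by blast

lemma f_fwd:
  assumes D: "defect_op V1 V2 = (\<lambda>_. 0)"
  and E1: "V2 ` ker_op (adj V1) = ker_op (adj V1)" and E2: "V1 ` ker_op (adj V2) = ker_op (adj V2)"
  and O: "orth_sets (ker_op (adj V1)) (ker_op (adj V2))"
  shows "let A = ominus_sp (range V1) (range (V1 \<circ> V2));
                B = ominus_sp (range V2) (range (V1 \<circ> V2));
                C = range (V1 \<circ> V2)
            in orth_sets A B \<and> orth_sets A C \<and> orth_sets B C \<and> ssum (ssum A B) C = UNIV"
proof -
  interpret s: cpair V2 V1 by (rule sym)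
  have A: "ominus_sp (range V1) (range (V1 \<circ> V2)) = ker_op (adj V2)" using A_eq E2 by simp
  have B: "ominus_sp (range V2) (range (V1 \<circ> V2)) = ker_op (adj V1)" using s.A_eq E1 comm by simp
  have AB: "orth_sets (ker_op (adj V2)) (ker_op (adj V1))"
    using O unfolding orth_sets_def by (metis inner_commute)
  have U: "ssum (ssum (ker_op (adj V2)) (ker_op (adj V1))) (range (V1 \<circ> V2)) = UNIV"
  proof (rule set_eqI, rule iffI[OF UNIV_I])
    fix x
    define c where "c = V1 (V2 (adj (V1 \<circ> V2) x))"
    define a where "a = V1 (adj V1 x - V2 (adj (V1 \<circ> V2) x))"
    define b where "b = V2 (adj V2 x - V1 (adj (V1 \<circ> V2) x))"
    have aK: "a \<in> V1 ` ker_op (adj V2)" unfolding a_def ker_op_def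
      by (intro imageI) (simp add: adj_diff[OF i2] adj_VV[OF i2] adjV del: comp_apply)
    have bK: "b \<in> V2 ` ker_op (adj V1)" unfolding b_def ker_op_def
      by (intro imageI) (simp add: adj_diff[OF i1] adj_VV[OF i1] adjV' del: comp_apply)
    have "defect_op V1 V2 x = 0" using D by simp
    then have d0: "x - V1 (adj V1 x) - V2 (adj V2 x) + c = 0"
      unfolding defect_op_def c_def by (simp add: adjV del: comp_apply)
    have a2: "a = V1 (adj V1 x) - c" unfolding a_def c_def by (simp add: clin_diff[OF iso_clin[OF i1]])
    have b2: "b = V2 (adj V2 x) - c" unfolding b_def c_def by (simp add: clin_diff[OF iso_clin[OF i2]] comm_pt)
    have "x = a + b + c" using d0 unfolding a2 b2 by (simp add: algebra_simps)
    moreover have "c \<in> range (V1 \<circ> V2)" unfolding c_def by (metis comp_apply rangeI)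
    ultimately show "x \<in> ssum (ssum (ker_op (adj V2)) (ker_op (adj V1))) (range (V1 \<circ> V2))"
      using aK bK E1 E2 unfolding ssum_def by blast
  qed
  show ?thesis unfolding Let_def A B
    using AB U Aperp[of "range V1" "range (V1 \<circ> V2)"] Aperp[of "range V2" "range (V1 \<circ> V2)"] A B by simp
qed

lemma f_bwd:
  assumes "let A = ominus_sp (range V1) (range (V1 \<circ> V2));
                B = ominus_sp (range V2) (range (V1 \<circ> V2));
                C = range (V1 \<circ> V2)
            in orth_sets A B \<and> orth_sets A C \<and> orth_sets B C \<and> ssum (ssum A B) C = UNIV"
  shows "V2 ` ker_op (adj V1) = ker_op (adj V1)"
proof -
  interpret s: cpair V2 V1 by (rule sym)
  define A where "A = ominus_sp (range V1) (range (V1 \<circ> V2))"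
  define B where "B = ominus_sp (range V2) (range (V1 \<circ> V2))"
  define C where "C = range (V1 \<circ> V2)"
  have h: "orth_sets A B" "orth_sets A C" "orth_sets B C" "ssum (ssum A B) C = UNIV"
    using assms unfolding A_def B_def C_def Let_def by auto
  have A: "A = V1 ` ker_op (adj V2)" unfolding A_def by (rule A_eq)
  have B: "B = V2 ` ker_op (adj V1)" unfolding B_def using s.A_eq comm by simp
  have BC: "\<And>b c. b \<in> B \<Longrightarrow> c \<in> C \<Longrightarrow> inner b c = 0" using h(3) unfolding orth_sets_def by blast
  have AB: "\<And>a b. a \<in> A \<Longrightarrow> b \<in> B \<Longrightarrow> inner a b = 0" using h(1) unfolding orth_sets_def by blast
  show ?thesis
  proof
    show "ker_op (adj V1) \<subseteq> V2 ` ker_op (adj V1)"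
    proof
      fix k assume kK: "k \<in> ker_op (adj V1)"
      have perp1: "inner k (V1 z) = 0" for z using ker_adjD[OF i1] kK K1_iff by blast
      have "k \<in> ssum (ssum A B) C" using h(4) by simp
      then obtain a b c where abc: "a \<in> A" "b \<in> B" "c \<in> C" "k = a + b + c" unfolding ssum_def by blast
      have ka: "inner k a = 0" using abc(1) A perp1 by auto
      have kc: "inner k c = 0" using abc(3) perp1 unfolding C_def by auto
      have "inner k k = inner k b" using abc(4) ka kc by (simp add: inner_add_right)
      moreover have "inner b b = inner k b"
      proof -
        have "inner k b = inner a b + inner b b + inner c b" using abc(4) by (simp add: inner_add_left)
        moreover have "inner c b = inner b c" by (rule inner_commute)
        ultimately show ?thesis using abc AB[of a b] BC[of b c] by simp
      qed
      ultimately have "inner (k - b) (k - b) = 0"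
        by (simp add: inner_diff_left inner_diff_right inner_commute)
      then have "k = b" by simp
      then show "k \<in> V2 ` ker_op (adj V1)" using abc(2) B by simp
    qed
  next
    show "V2 ` ker_op (adj V1) \<subseteq> ker_op (adj V1)"
    proof
      fix m assume mB': "m \<in> V2 ` ker_op (adj V1)"
      then have mB: "m \<in> B" using B by simp
      have "inner m (V1 h) = 0" for h
      proof -
        define q where "q = h - V2 (adj V2 h)"
        have qK: "q \<in> ker_op (adj V2)" unfolding q_def using QV_ker[OF i2] K2_iff by blast
        have "V1 h = V1 q + V1 (V2 (adj V2 h))" unfolding q_def by (simp add: clin_diff[OF iso_clin[OF i1]])
        moreover have "inner m (V1 q) = 0" using AB[of "V1 q" m] mB qK A by (simp add: inner_commute)
        moreover have "inner m (V1 (V2 (adj V2 h))) = 0" using BC[of m] mB unfolding C_def by (metis comp_apply rangeI)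
        ultimately show ?thesis by (simp add: inner_add_right)
      qed
      then show "m \<in> ker_op (adj V1)" using ker_adjI[OF i1] K1_iff by blast
    qed
  qed
qed

end

context
  fixes E :: "'a::complex_inner set" and U :: "'a \<Rightarrow> 'a"
  assumes Ecs: "csubspace E" and Uu: "unitary_on E U"
begin

lemma U_in: "x \<in> E \<Longrightarrow> U x \<in> E" using Uu unfolding unitary_on_def by blast
lemma U_add: "x \<in> E \<Longrightarrow> y \<in> E \<Longrightarrow> U (x + y) = U x + U y"
  using Uu unfolding unitary_on_def clinear_on_def by blast
lemma U_scaleR: "x \<in> E \<Longrightarrow> U (r *\<^sub>R x) = r *\<^sub>R U x"
  using Uu unfolding unitary_on_def clinear_on_def by (simp add: scaleR_scaleC)
lemma U_zero: "U 0 = 0"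
proof -
  have "0 \<in> E" using Ecs unfolding csubspace_def by blast
  then show ?thesis using U_add[of 0 0] by simp
qed
lemma U_norm: "x \<in> E \<Longrightarrow> norm (U x) = norm x" using Uu unfolding unitary_on_def by blast
lemma U_inner: "x \<in> E \<Longrightarrow> y \<in> E \<Longrightarrow> inner (U x) (U y) = inner x y"
proof -
  assume x: "x \<in> E" and y: "y \<in> E"
  have xy: "x + y \<in> E" using x y Ecs unfolding csubspace_def by blast
  have "inner (U x) (U y) = ((norm (U x + U y))\<^sup>2 - (norm (U x))\<^sup>2 - (norm (U y))\<^sup>2) / 2" by (rule polar)
  also have "U x + U y = U (x + y)" using U_add x y by simp
  finally show ?thesis using x y xy by (simp add: U_norm polar[of x y])
qed
lemma Esub: "\<forall>a\<in>E. \<forall>b\<in>E. a - b \<in> E" using Ecs csubspace_diff by blast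

lemma Uadj_U: "x \<in> E \<Longrightarrow> adj_on E U (U x) = x"
  by (rule adj_on_unique) (simp_all add: U_inner Esub)

lemma Uadj: "y \<in> E \<Longrightarrow> adj_on E U y \<in> E \<and> U (adj_on E U y) = y"
proof -
  assume "y \<in> E"
  then obtain x where "x \<in> E" "y = U x" using Uu unfolding unitary_on_def by blast
  then show ?thesis using Uadj_U by simp
qed

lemma Uadj_inner: "x \<in> E \<Longrightarrow> c \<in> E \<Longrightarrow> inner x (adj_on E U c) = inner (U x) c"
proof -
  assume x: "x \<in> E" and c: "c \<in> E"
  have z: "adj_on E U c \<in> E" "U (adj_on E U c) = c" using Uadj[OF c] by auto
  have "inner x (adj_on E U c) = inner (U x) (U (adj_on E U c))" using U_inner[OF x z(1)] by simp
  then show ?thesis using z(2) by simp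
qed

lemma Uadj_add: "a \<in> E \<Longrightarrow> b \<in> E \<Longrightarrow> adj_on E U (a + b) = adj_on E U a + adj_on E U b"
proof -
  assume a: "a \<in> E" and b: "b \<in> E"
  have "U (adj_on E U a + adj_on E U b) = a + b" using Uadj[OF a] Uadj[OF b] U_add by simp
  moreover have "adj_on E U a + adj_on E U b \<in> E" using Uadj[OF a] Uadj[OF b] Ecs unfolding csubspace_def by blast
  ultimately have "adj_on E U (U (adj_on E U a + adj_on E U b)) = adj_on E U a + adj_on E U b"
    using Uadj_U by blast
  then show ?thesis using \<open>U (adj_on E U a + adj_on E U b) = a + b\<close> by simp
qed

lemma Uadj_zero: "adj_on E U 0 = 0"
  using Uadj_U[of 0] U_zero Ecs unfolding csubspace_def by simp

end

context
  fixes E :: "'a::complex_inner set" and P :: "'a \<Rightarrow> 'a"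
  assumes Ecs: "csubspace E" and Pp: "orth_proj_on E P"
begin
lemma P_in: "x \<in> E \<Longrightarrow> P x \<in> E" using Pp unfolding orth_proj_on_def by blast
lemma P_idem: "x \<in> E \<Longrightarrow> P (P x) = P x" using Pp unfolding orth_proj_on_def by blast
lemma P_sym: "x \<in> E \<Longrightarrow> y \<in> E \<Longrightarrow> inner (P x) y = inner x (P y)" using Pp unfolding orth_proj_on_def by blast
lemma P_add: "x \<in> E \<Longrightarrow> y \<in> E \<Longrightarrow> P (x + y) = P x + P y"
  using Pp unfolding orth_proj_on_def clinear_on_def by blast
lemma P_diff: "x \<in> E \<Longrightarrow> y \<in> E \<Longrightarrow> P (x - y) = P x - P y"
proof -
  assume x: "x \<in> E" and y: "y \<in> E"
  have "x - y \<in> E" using x y Ecs csubspace_diff by blast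
  then have "P (x - y) + P y = P x" using P_add[of "x - y" y] y by simp
  then show ?thesis by (simp add: algebra_simps)
qed
lemma P_zero: "P 0 = 0"
proof -
  have "0 \<in> E" using Ecs unfolding csubspace_def by blast
  then show ?thesis using P_add[of 0 0] by simp
qed
lemma P_perp: "x \<in> E \<Longrightarrow> y \<in> E \<Longrightarrow> inner (P x) (y - P y) = 0"
  by (simp add: P_sym P_in inner_diff_right P_idem)
lemma P_fix: "x \<in> E \<Longrightarrow> inner x (y - P y) = 0 \<Longrightarrow> y \<in> E \<Longrightarrow> x = y \<Longrightarrow> P y = y"
proof -
  assume y: "y \<in> E" and o: "inner x (y - P y) = 0" and "x = y"
  then have "inner (y - P y) (y - P y) = 0" using P_perp[OF y y] by (simp add: inner_diff_left)
  then show "P y = y" by simp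
qed
end

definition delta :: "nat \<Rightarrow> 'a::zero \<Rightarrow> nat \<Rightarrow> 'a" where
  "delta n e = (\<lambda>m. if m = n then e else 0)"

lemma delta_hardy: "csubspace E \<Longrightarrow> e \<in> E \<Longrightarrow> delta n e \<in> hardy2 E"
  unfolding hardy2_def delta_def csubspace_def
  by (auto intro!: summable_finite[of "{n}"] split: if_splits)

lemma sums_fin2: "(f::nat \<Rightarrow> real) sums s \<Longrightarrow> (\<And>m. m \<noteq> n \<Longrightarrow> m \<noteq> Suc n \<Longrightarrow> f m = 0) \<Longrightarrow> s = f n + f (Suc n)"
proof -
  assume s: "f sums s" and z: "\<And>m. m \<noteq> n \<Longrightarrow> m \<noteq> Suc n \<Longrightarrow> f m = 0"
  have "f sums (sum f {n, Suc n})" by (rule sums_finite) (use z in auto)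
  then show ?thesis using sums_unique2[OF s] by simp
qed

lemma sums_fin1: "(f::nat \<Rightarrow> real) sums s \<Longrightarrow> (\<And>m. m \<noteq> 0 \<Longrightarrow> f m = 0) \<Longrightarrow> s = f 0"
proof -
  assume s: "f sums s" and z: "\<And>m. m \<noteq> 0 \<Longrightarrow> f m = 0"
  have "f sums (sum f {0})" by (rule sums_finite) (use z in auto)
  then show ?thesis using sums_unique2[OF s] by simp
qed

locale bcl = cpair V1 V2 for V1 V2 :: "'a::chilbert_space \<Rightarrow> 'a" +
  fixes E P U Hp Hu and W :: "'a \<Rightarrow> nat \<Rightarrow> 'a"
  assumes Ecl: "closed_csubspace E" and Pp: "orth_proj_on E P" and Uu: "unitary_on E U"
  and Hpc: "closed_csubspace Hp" and Huc: "closed_csubspace Hu" and oHpu: "orth_sets Hp Hu"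
  and sHpu: "ssum Hp Hu = UNIV"
  and rp1: "reducing Hp V1" and rp2: "reducing Hp V2" and ru1: "reducing Hu V1" and ru2: "reducing Hu V2"
  and uu1: "unitary_on Hu V1" and uu2: "unitary_on Hu V2"
  and Wim: "W ` Hp = hardy2 E" and Winj: "inj_on W Hp"
  and Wadd: "\<forall>x\<in>Hp. \<forall>y\<in>Hp. W (x + y) = (\<lambda>n. W x n + W y n)"
  and Wsc: "\<forall>c. \<forall>x\<in>Hp. W (scaleC c x) = (\<lambda>n. scaleC c (W x n))"
  and Wn: "\<forall>x\<in>Hp. l2norm (W x) = norm x"
  and W1: "\<forall>x\<in>Hp. W (V1 x) = M_phi1 E P U (W x)"
  and W2: "\<forall>x\<in>Hp. W (V2 x) = M_phi2 E P U (W x)"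
begin

lemma Ecs: "csubspace E" using Ecl unfolding closed_csubspace_def by blast
lemma Hpcs: "csubspace Hp" using Hpc unfolding closed_csubspace_def by blast

lemma Wh: "x \<in> Hp \<Longrightarrow> W x \<in> hardy2 E"
proof -
  assume "x \<in> Hp"
  then have "W x \<in> W ` Hp" by (rule imageI)
  then show ?thesis by (simp only: Wim)
qed

lemma WE: "x \<in> Hp \<Longrightarrow> W x n \<in> E" using Wh unfolding hardy2_def by blast

lemma Wsq: "x \<in> Hp \<Longrightarrow> (\<lambda>n. (norm (W x n))\<^sup>2) sums (norm x)\<^sup>2"
proof -
  assume x: "x \<in> Hp"
  have sm: "summable (\<lambda>n. (norm (W x n))\<^sup>2)" using Wh[OF x] unfolding hardy2_def by blast
  have "sqrt (\<Sum>n. (norm (W x n))\<^sup>2) = norm x" using Wn x unfolding l2norm_def by blast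
  moreover have "0 \<le> (\<Sum>n. (norm (W x n))\<^sup>2)" by (rule suminf_nonneg[OF sm]) simp
  ultimately have "(\<Sum>n. (norm (W x n))\<^sup>2) = (norm x)\<^sup>2" using real_sqrt_pow2 by fastforce
  then show ?thesis using sm sums_iff by blast
qed

lemma W_inner: "x \<in> Hp \<Longrightarrow> y \<in> Hp \<Longrightarrow> (\<lambda>n. inner (W x n) (W y n)) sums inner x y"
proof -
  assume x: "x \<in> Hp" and y: "y \<in> Hp"
  have xy: "x + y \<in> Hp" using x y Hpcs unfolding csubspace_def by blast
  have "(\<lambda>n. ((norm (W (x + y) n))\<^sup>2 - (norm (W x n))\<^sup>2 - (norm (W y n))\<^sup>2) / 2) sums
        (((norm (x + y))\<^sup>2 - (norm x)\<^sup>2 - (norm y)\<^sup>2) / 2)"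
    by (intro sums_divide sums_diff Wsq x y xy)
  moreover have "W (x + y) = (\<lambda>n. W x n + W y n)" using Wadd x y by blast
  ultimately show ?thesis by (simp add: polar[symmetric])
qed

lemma delta_pre: "e \<in> E \<Longrightarrow> \<exists>y\<in>Hp. W y = delta n e"
proof -
  assume "e \<in> E"
  then have "delta n e \<in> W ` Hp" using delta_hardy[OF Ecs] Wim by simp
  then show ?thesis by (auto simp: image_iff)
qed

lemma K1_Hp: "adj V1 x = 0 \<Longrightarrow> x \<in> Hp"
proof -
  assume x0: "adj V1 x = 0"
  obtain xp xu where d: "xp \<in> Hp" "xu \<in> Hu" "x = xp + xu" using sHpu unfolding ssum_def by blast
  have "xu \<in> V1 ` Hu" using uu1 d(2) unfolding unitary_on_def by simp
  then obtain w where "xu = V1 w" by blast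
  then have "inner x xu = 0" using ker_adjD[OF i1 x0] by simp
  moreover have "inner xp xu = 0" using oHpu d unfolding orth_sets_def by blast
  ultimately have "inner xu xu = 0" using d(3) by (simp add: inner_add_left)
  then show "x \<in> Hp" using d by simp
qed

lemma P0: "P 0 = 0" by (rule P_zero[OF Ecs Pp])
lemma U0: "U 0 = 0" by (rule U_zero[OF Ecs Uu])
lemma Ua0: "adj_on E U 0 = 0" by (rule Uadj_zero[OF Ecs Uu])
lemma E0: "0 \<in> E" using Ecs unfolding csubspace_def by blast

lemma M1_delta: "M_phi1 E P U (delta n e) m =
   (if m = n then adj_on E U (e - P e) else if m = Suc n then adj_on E U (P e) else 0)"
  unfolding M_phi1_def delta_def by (cases m) (auto simp: P0 Ua0)

lemma M2_delta0: "e \<in> E \<Longrightarrow> P (U e) = U e \<Longrightarrow> M_phi2 E P U (delta 0 e) = delta 0 (U e)"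
  unfolding M_phi2_def delta_def
proof (rule ext)
  fix m assume "P (U e) = U e"
  then show "P (U (if m = 0 then e else 0)) + (case m of 0 \<Rightarrow> 0 | Suc k \<Rightarrow> U (if k = 0 then e else 0) - P (U (if k = 0 then e else 0))) =
    (if m = 0 then U e else 0)"
    by (cases m) (auto simp: P0 U0)
qed

lemma key_i:
  assumes x0: "adj V1 x = 0"
  shows "x \<in> Hp \<and> W x = delta 0 (W x 0) \<and> P (U (W x 0)) = U (W x 0)"
proof -
  have xH: "x \<in> Hp" by (rule K1_Hp[OF x0])
  define g where "g = W x"
  have gE: "g n \<in> E" for n unfolding g_def by (rule WE[OF xH])
  have base: "inner (g n) (adj_on E U (e - P e)) + inner (g (Suc n)) (adj_on E U (P e)) = 0"
    if eE: "e \<in> E" for n e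
  proof -
    obtain y where y: "y \<in> Hp" "W y = delta n e" using delta_pre[OF eE] by blast
    have V1y: "V1 y \<in> Hp" using rp1 y(1) unfolding reducing_on_def by blast
    have WV: "W (V1 y) = M_phi1 E P U (delta n e)" using W1 y by simp
    have "(\<lambda>m. inner (g m) (W (V1 y) m)) sums inner x (V1 y)" unfolding g_def by (rule W_inner[OF xH V1y])
    then have "inner x (V1 y) = inner (g n) (W (V1 y) n) + inner (g (Suc n)) (W (V1 y) (Suc n))"
      by (rule sums_fin2) (simp add: WV M1_delta)
    moreover have "inner x (V1 y) = 0" by (rule ker_adjD[OF i1 x0])
    ultimately show ?thesis by (simp add: WV M1_delta)
  qed
  have A: "inner (g n) (adj_on E U (e - P e)) = 0" if eE: "e \<in> E" for n e
  proof -
    have e2: "e - P e \<in> E" using eE P_in[OF Ecs Pp] Ecs csubspace_diff by blast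
    have "P (e - P e) = 0" using P_diff[OF Ecs Pp eE P_in[OF Ecs Pp eE]] P_idem[OF Ecs Pp eE] by simp
    then show ?thesis using base[OF e2, of n] by (simp add: Ua0)
  qed
  have B: "inner (g (Suc n)) (adj_on E U (P e)) = 0" if eE: "e \<in> E" for n e
  proof -
    have e2: "P e \<in> E" using eE P_in[OF Ecs Pp] by blast
    show ?thesis using base[OF e2, of n] P_idem[OF Ecs Pp eE] by (simp add: Ua0)
  qed
  have gS: "g (Suc n) = 0" for n
  proof -
    define e where "e = U (g (Suc n))"
    have eE: "e \<in> E" unfolding e_def using U_in[OF Ecs Uu gE] .
    have PeE: "P e \<in> E" using P_in[OF Ecs Pp eE] .
    have dE: "e - P e \<in> E" using eE PeE Ecs csubspace_diff by blast
    have "adj_on E U e = adj_on E U (e - P e) + adj_on E U (P e)"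
      using Uadj_add[OF Ecs Uu dE PeE] by simp
    then have "inner (g (Suc n)) (adj_on E U e) = 0"
      using A[OF eE, of "Suc n"] B[OF eE, of n] by (simp add: inner_add_right)
    then show ?thesis unfolding e_def using Uadj_U[OF Ecs Uu gE] by simp
  qed
  have g0: "P (U (g 0)) = U (g 0)"
  proof -
    have ue: "U (g 0) \<in> E" using U_in[OF Ecs Uu gE] .
    have dE: "U (g 0) - P (U (g 0)) \<in> E" using ue P_in[OF Ecs Pp ue] Ecs csubspace_diff by blast
    have "inner (U (g 0)) (U (g 0) - P (U (g 0))) = 0"
      using A[OF ue, of 0] Uadj_inner[OF Ecs Uu gE dE] by simp
    then show ?thesis by (rule P_fix[OF Ecs Pp ue _ ue refl])
  qed
  have "W x = delta 0 (W x 0)"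
  proof
    fix m show "W x m = delta 0 (W x 0) m"
      unfolding delta_def by (cases m) (use gS g_def in auto)
  qed
  then show ?thesis using xH g0 g_def by blast
qed

lemma key_ii:
  assumes gE: "g \<in> E" and gP: "P (U g) = U g"
  shows "\<exists>x. adj V1 x = 0 \<and> x \<in> Hp \<and> W x = delta 0 g"
proof -
  obtain x where x: "x \<in> Hp" "W x = delta 0 g" using delta_pre[OF gE] by blast
  have "inner x (V1 z) = 0" for z
  proof -
    obtain zp zu where d: "zp \<in> Hp" "zu \<in> Hu" "z = zp + zu" using sHpu unfolding ssum_def by blast
    have "V1 zu \<in> Hu" using ru1 d(2) unfolding reducing_on_def by blast
    then have u: "inner x (V1 zu) = 0" using oHpu x(1) unfolding orth_sets_def by blast
    have V1p: "V1 zp \<in> Hp" using rp1 d(1) unfolding reducing_on_def by blast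
    have "(\<lambda>m. inner (W x m) (W (V1 zp) m)) sums inner x (V1 zp)" by (rule W_inner[OF x(1) V1p])
    then have "inner x (V1 zp) = inner (W x 0) (W (V1 zp) 0)"
      by (rule sums_fin1) (simp add: x(2) delta_def)
    also have "W (V1 zp) 0 = adj_on E U (W zp 0 - P (W zp 0))"
      using W1 d(1) unfolding M_phi1_def by simp
    also have "inner (W x 0) \<dots> = inner (U g) (W zp 0 - P (W zp 0))"
    proof -
      have f0: "W zp 0 \<in> E" by (rule WE[OF d(1)])
      have "W zp 0 - P (W zp 0) \<in> E" using f0 P_in[OF Ecs Pp f0] Ecs csubspace_diff by blast
      then show ?thesis using Uadj_inner[OF Ecs Uu gE] x(2) by (simp add: delta_def)
    qed
    also have "\<dots> = 0"
      using P_perp[OF Ecs Pp U_in[OF Ecs Uu gE] WE[OF d(1)]] gP by simp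
    finally have "inner x (V1 zp) = 0" .
    then show ?thesis using u d(3) by (simp add: clin_add[OF iso_clin[OF i1]] inner_add_right)
  qed
  then have "adj V1 x = 0" using ker_adjI[OF i1] by blast
  then show ?thesis using x by blast
qed

lemma g_fwd:
  assumes E1: "V2 ` ker_op (adj V1) = ker_op (adj V1)"
  shows "reducing_on E (P ` E) U"
proof -
  have main: "U p \<in> P ` E \<and> adj_on E U p \<in> P ` E" if pP: "p \<in> P ` E" for p
  proof -
    obtain e where e: "e \<in> E" "p = P e" using pP by blast
    have pE: "p \<in> E" using e P_in[OF Ecs Pp] by blast
    have Pp_p: "P p = p" using e P_idem[OF Ecs Pp] by simp
    define g where "g = adj_on E U p"
    have gE: "g \<in> E" and Ug: "U g = p" using Uadj[OF Ecs Uu pE] g_def by auto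
    have gT: "P (U g) = U g" using Ug Pp_p by simp
    obtain x where x: "adj V1 x = 0" "x \<in> Hp" "W x = delta 0 g" using key_ii[OF gE gT] by blast
    have "x \<in> ker_op (adj V1)" using x(1) K1_iff by blast
    then have "x \<in> V2 ` ker_op (adj V1)" using E1 by simp
    then obtain x' where x': "adj V1 x' = 0" "x = V2 x'" using K1_iff by blast
    obtain hx' where hx': "x' \<in> Hp" "W x' = delta 0 (W x' 0)" "P (U (W x' 0)) = U (W x' 0)"
      using key_i[OF x'(1)] by blast
    have "W x = delta 0 (U (W x' 0))"
      using W2 hx' x'(2) M2_delta0[OF WE[OF hx'(1)] hx'(3)] by simp
    then have "delta 0 g 0 = delta 0 (U (W x' 0)) 0" using x(3) by simp
    then have "g = U (W x' 0)" unfolding delta_def by simp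
    then have "g = P (U (W x' 0))" using hx'(3) by simp
    moreover have "P (U (W x' 0)) \<in> P ` E" using U_in[OF Ecs Uu WE[OF hx'(1)]] by (rule imageI)
    ultimately have a: "adj_on E U p \<in> P ` E" using g_def by simp
    have "V2 x \<in> V2 ` ker_op (adj V1)" using x(1) K1_iff by blast
    then have "V2 x \<in> ker_op (adj V1)" using E1 by simp
    then have kx: "adj V1 (V2 x) = 0" by (simp add: K1_iff)
    have "W (V2 x) = delta 0 p" using W2 x(2,3) M2_delta0[OF gE gT] Ug by simp
    then have "W (V2 x) 0 = p" unfolding delta_def by simp
    then have "P (U p) = U p" using key_i[OF kx] by simp
    then have b: "U p \<in> P ` E" using U_in[OF Ecs Uu pE] by (metis imageI)
    show ?thesis using a b by blast
  qed
  then show ?thesis unfolding reducing_on_def by blast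
qed

end

lemma inner_ext: "(\<And>w. inner a w = inner b w) \<Longrightarrow> a = (b::'a::real_inner)"
proof -
  assume h: "\<And>w. inner a w = inner b w"
  have "inner (a - b) (a - b) = 0" using h[of "a - b"] by (simp add: inner_diff_left)
  then show ?thesis by simp
qed

lemma ocomp_cs:
  assumes M: "csubspace M" shows "closed_csubspace (ocomp M)"
proof -
  have cl: "closed (ocomp M)"
  proof -
    have "ocomp M = (\<Inter>m\<in>M. {x. inner x m = 0})" unfolding ocomp_def by auto
    moreover have "closed {x. inner x m = (0::real)}" for m
      by (rule closed_Collect_eq) (intro continuous_intros)+
    ultimately show ?thesis by auto
  qed
  have "csubspace (ocomp M)"
    unfolding csubspace_def
  proof (intro conjI ballI allI)
    show "0 \<in> ocomp M" unfolding ocomp_def by simp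
    fix x y assume "x \<in> ocomp M" "y \<in> ocomp M"
    then show "x + y \<in> ocomp M" unfolding ocomp_def by (simp add: inner_add_left)
  next
    fix c x assume x: "x \<in> ocomp M"
    have "inner (scaleC \<i> x) m = 0" if "m \<in> M" for m
    proof -
      have "scaleC \<i> m \<in> M" using M that unfolding csubspace_def by blast
      then show ?thesis using x unfolding ocomp_def by (simp add: inner_scaleC_i_left)
    qed
    then show "scaleC c x \<in> ocomp M" using x unfolding ocomp_def
      by (simp add: scaleC_decomp[of c x] inner_add_left)
  qed
  then show ?thesis using cl unfolding closed_csubspace_def by blast
qed

lemma range_cs: "clinear T \<Longrightarrow> csubspace (range T)"
  unfolding csubspace_def
proof (intro conjI ballI allI)
  assume T: "clinear T"
  show "0 \<in> range T" using clin_zero[OF T] by (metis rangeI)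
  fix x y assume "x \<in> range T" "y \<in> range T"
  then obtain a b where "x = T a" "y = T b" by blast
  then show "x + y \<in> range T" using clin_add[OF T, of a b] by (metis rangeI)
next
  fix c x assume T: "clinear T" and "x \<in> range T"
  then obtain a where "x = T a" by blast
  then show "scaleC c x \<in> range T" using clin_scaleC[OF T, of c a] by (metis rangeI)
qed

lemma INT_cs: "(\<And>n. csubspace (A n)) \<Longrightarrow> csubspace (\<Inter>n. A n)"
  unfolding csubspace_def by blast

lemma iso_id: "cisometry id" unfolding cisometry_def clinear_on_def by simp

context cpair begin

abbreviation "VV \<equiv> V1 \<circ> V2"
abbreviation "As \<equiv> adj (V1 \<circ> V2)"

lemma pow_Suc_app: "(f ^^ Suc n) z = f ((f ^^ n) z)" by simp
lemma pow_Suc_app': "(f ^^ Suc n) z = (f ^^ n) (f z)" by (simp add: funpow_swap1)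

lemma pow_iso: "cisometry (VV ^^ n)"
proof (induction n)
  case 0 show ?case by (simp only: funpow.simps(1)) (rule iso_id)
next
  case (Suc n) show ?case by (simp only: funpow.simps(2)) (rule iso_comp[OF iV Suc.IH])
qed

lemma pow_adj: "inner ((As ^^ n) y) x = inner y ((VV ^^ n) x)"
proof (induction n arbitrary: y)
  case 0 then show ?case by simp
next
  case (Suc n)
  have "inner ((As ^^ Suc n) y) x = inner ((As ^^ n) (As y)) x" by (simp only: pow_Suc_app')
  also have "\<dots> = inner (As y) ((VV ^^ n) x)" by (rule Suc.IH)
  also have "\<dots> = inner y (VV ((VV ^^ n) x))" by (rule adj_char[OF iV])
  also have "\<dots> = inner y ((VV ^^ Suc n) x)" by (simp only: pow_Suc_app)
  finally show ?case .
qed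

lemma As_pow_VV: "(As ^^ n) ((VV ^^ n) x) = x"
  by (rule inner_ext) (simp add: pow_adj iso_inner[OF pow_iso])

lemma As_pow_clin: "clinear (As ^^ n)"
proof (induction n)
  case 0 show ?case by (simp only: funpow.simps(1)) (simp add: clinear_on_def)
next
  case (Suc n) show ?case by (simp only: funpow.simps(2)) (rule clin_comp[OF adj_clin[OF iV] Suc.IH])
qed

lemma As_pow_zero: "(As ^^ n) 0 = 0" by (rule clin_zero[OF As_pow_clin])

lemma VV_pow_clin: "clinear (VV ^^ n)" by (rule iso_clin[OF pow_iso])

lemma V1_VV: "V1 (VV x) = VV (V1 x)" by (simp add: comm_pt)
lemma V2_VV: "V2 (VV x) = VV (V2 x)" by (simp add: comm_pt)
lemma V1_pow: "V1 ((VV ^^ n) x) = (VV ^^ n) (V1 x)"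
proof (induction n)
  case (Suc n) show ?case by (simp only: pow_Suc_app V1_VV Suc.IH)
qed simp
lemma V2_pow: "V2 ((VV ^^ n) x) = (VV ^^ n) (V2 x)"
proof (induction n)
  case (Suc n) show ?case by (simp only: pow_Suc_app V2_VV Suc.IH)
qed simp

definition "Hu = (\<Inter>N. range (VV ^^ N))"
definition "Hp = ocomp Hu"

lemma Hu_iff: "x \<in> Hu \<longleftrightarrow> (\<forall>N. \<exists>y. x = (VV ^^ N) y)"
  unfolding Hu_def by blast

lemma Hu_cs: "closed_csubspace Hu"
proof -
  have "csubspace Hu" unfolding Hu_def by (intro INT_cs range_cs VV_pow_clin)
  moreover have "closed Hu" unfolding Hu_def
    by (intro closed_INT ballI iso_range_closed pow_iso)
  ultimately show ?thesis unfolding closed_csubspace_def by blast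
qed

lemma Hp_cs: "closed_csubspace Hp"
  unfolding Hp_def using Hu_cs ocomp_cs unfolding closed_csubspace_def by blast

lemma Hu_V1: "x \<in> Hu \<Longrightarrow> V1 x \<in> Hu"
  unfolding Hu_iff using V1_pow by metis
lemma Hu_V2: "x \<in> Hu \<Longrightarrow> V2 x \<in> Hu"
  unfolding Hu_iff using V2_pow by metis

lemma Hu_pre: "x \<in> Hu \<Longrightarrow> \<exists>y. x = V1 (V2 ((VV ^^ N) y))"
proof -
  assume "x \<in> Hu"
  then obtain y where "x = (VV ^^ Suc N) y" unfolding Hu_iff by blast
  then show ?thesis by auto
qed

lemma Hu_adjV1: "x \<in> Hu \<Longrightarrow> adj V1 x \<in> Hu"
proof -
  assume x: "x \<in> Hu"
  have "\<exists>y. adj V1 x = (VV ^^ N) y" for N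
  proof -
    obtain y where "x = V1 (V2 ((VV ^^ N) y))" using Hu_pre[OF x] by blast
    then have "adj V1 x = (VV ^^ N) (V2 y)" by (simp add: adj_VV[OF i1] V2_pow)
    then show ?thesis by blast
  qed
  then show ?thesis unfolding Hu_iff by blast
qed

lemma Hu_adjV2: "x \<in> Hu \<Longrightarrow> adj V2 x \<in> Hu"
proof -
  assume x: "x \<in> Hu"
  have "\<exists>y. adj V2 x = (VV ^^ N) y" for N
  proof -
    obtain y where "x = V1 (V2 ((VV ^^ N) y))" using Hu_pre[OF x] by blast
    then have "x = V2 (V1 ((VV ^^ N) y))" by (simp add: comm_pt)
    then have "adj V2 x = (VV ^^ N) (V1 y)" by (simp add: adj_VV[OF i2] V1_pow)
    then show ?thesis by blast
  qed
  then show ?thesis unfolding Hu_iff by blast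
qed

lemma Hu_As: "x \<in> Hu \<Longrightarrow> As x \<in> Hu"
  using Hu_adjV1 Hu_adjV2 adjV by simp

lemma Hu_un1: "unitary_on Hu V1"
  unfolding unitary_on_def
proof (intro conjI ballI)
  show "clinear_on Hu V1" by (rule clin_on_sub[OF iso_clin[OF i1]])
  show "V1 ` Hu = Hu"
  proof
    show "V1 ` Hu \<subseteq> Hu" using Hu_V1 by blast
    show "Hu \<subseteq> V1 ` Hu"
    proof
      fix x assume x: "x \<in> Hu"
      obtain y where "x = V1 (V2 ((VV ^^ 0) y))" using Hu_pre[OF x] by blast
      then have "x = V1 (adj V1 x)" by (simp add: adj_VV[OF i1])
      then show "x \<in> V1 ` Hu" using Hu_adjV1[OF x] by blast
    qed
  qed
  fix x show "norm (V1 x) = norm x" by (rule iso_norm[OF i1])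
qed

lemma Hu_un2: "unitary_on Hu V2"
  unfolding unitary_on_def
proof (intro conjI ballI)
  show "clinear_on Hu V2" by (rule clin_on_sub[OF iso_clin[OF i2]])
  show "V2 ` Hu = Hu"
  proof
    show "V2 ` Hu \<subseteq> Hu" using Hu_V2 by blast
    show "Hu \<subseteq> V2 ` Hu"
    proof
      fix x assume x: "x \<in> Hu"
      obtain y where "x = V1 (V2 ((VV ^^ 0) y))" using Hu_pre[OF x] by blast
      then have "x = V2 (V1 y)" by (simp add: comm_pt)
      then have "x = V2 (adj V2 x)" by (simp add: adj_VV[OF i2])
      then show "x \<in> V2 ` Hu" using Hu_adjV2[OF x] by blast
    qed
  qed
  fix x show "norm (V2 x) = norm x" by (rule iso_norm[OF i2])
qed

lemma Hu_red1: "reducing Hu V1" unfolding reducing_on_def using Hu_V1 Hu_adjV1 by blast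
lemma Hu_red2: "reducing Hu V2" unfolding reducing_on_def using Hu_V2 Hu_adjV2 by blast

lemma Hp_red:
  assumes T: "cisometry T" and h1: "\<And>x. x \<in> Hu \<Longrightarrow> T x \<in> Hu" and h2: "\<And>x. x \<in> Hu \<Longrightarrow> adj T x \<in> Hu"
  shows "reducing Hp T"
proof -
  have a: "T x \<in> Hp \<and> adj T x \<in> Hp" if x: "x \<in> Hp" for x
  proof -
    have x0: "inner x m = 0" if "m \<in> Hu" for m using x that unfolding Hp_def ocomp_def by blast
    have "inner (T x) m = 0" if m: "m \<in> Hu" for m
    proof -
      have "inner (T x) m = inner (adj T m) x" using adj_char[OF T, of m x] by (simp add: inner_commute)
      also have "\<dots> = 0" using x0[OF h2[OF m]] by (simp add: inner_commute)
      finally show ?thesis .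
    qed
    moreover have "inner (adj T x) m = 0" if m: "m \<in> Hu" for m
      using x0[OF h1[OF m]] adj_char[OF T, of x m] by simp
    ultimately show ?thesis unfolding Hp_def ocomp_def by blast
  qed
  then show ?thesis unfolding reducing_on_def by blast
qed

lemma Hp_red1: "reducing Hp V1" by (rule Hp_red[OF i1 Hu_V1 Hu_adjV1])
lemma Hp_red2: "reducing Hp V2" by (rule Hp_red[OF i2 Hu_V2 Hu_adjV2])

lemma oHpu: "orth_sets Hp Hu" unfolding orth_sets_def Hp_def ocomp_def by blast

lemma sHpu: "ssum Hp Hu = UNIV"
proof -
  have "x \<in> ssum Hp Hu" for x
  proof -
    have cs: "csubspace Hu" and cl: "closed Hu" using Hu_cs unfolding closed_csubspace_def by auto
    have "\<exists>m\<in>Hu. x - m \<in> ocomp Hu"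
      by (rule proj_exists[OF cl]) (use cs csubspace_scaleR in \<open>auto simp: csubspace_def\<close>)
    then obtain m where "m \<in> Hu" "x - m \<in> Hp" unfolding Hp_def by blast
    then show ?thesis unfolding ssum_def by force
  qed
  then show ?thesis by blast
qed

end

lemma scaleC_diff_right: "scaleC c (a - b) = scaleC c a - scaleC c (b::'a::complex_inner)"
proof -
  have "scaleC c (a - b) + scaleC c b = scaleC c a" by (metis scaleC_add_right diff_add_cancel)
  then show ?thesis by (simp add: algebra_simps)
qed

context cpair begin

definition "QK z = z - VV (As z)"
definition "Wc x n = QK ((As ^^ n) x)"

lemma QK_K: "As (QK z) = 0" unfolding QK_def by (rule QV_ker[OF iV])
lemma QK_add: "QK (a + b) = QK a + QK b"
  unfolding QK_def by (simp add: adj_add[OF iV] clin_add[OF iso_clin[OF iV]] del: comp_apply)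
lemma QK_diff: "QK (a - b) = QK a - QK b"
  unfolding QK_def by (simp add: adj_diff[OF iV] clin_diff[OF iso_clin[OF iV]] del: comp_apply)
lemma QK_scaleC: "QK (scaleC c a) = scaleC c (QK a)"
  unfolding QK_def by (simp add: adj_scaleC[OF iV] clin_scaleC[OF iso_clin[OF iV]] scaleC_diff_right del: comp_apply)
lemma QK_zero: "QK 0 = 0" unfolding QK_def by (simp add: adj_zero[OF iV] clin_zero[OF iso_clin[OF iV]] del: comp_apply)
lemma QK_VV: "QK (VV u) = 0" unfolding QK_def by (simp only: adj_VV[OF iV]) simp
lemma QK_ker: "As a = 0 \<Longrightarrow> QK a = a"
  unfolding QK_def by (simp add: clin_zero[OF iso_clin[OF iV]] del: comp_apply)
lemma QK_decomp: "z = QK z + VV (As z)" unfolding QK_def by simp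

lemma Wc_add: "Wc (x + y) n = Wc x n + Wc y n"
  unfolding Wc_def by (simp add: clin_add[OF As_pow_clin] QK_add)
lemma Wc_diff: "Wc (x - y) n = Wc x n - Wc y n"
  unfolding Wc_def by (simp add: clin_diff[OF As_pow_clin] QK_diff)
lemma Wc_scaleC: "Wc (scaleC c x) n = scaleC c (Wc x n)"
  unfolding Wc_def by (simp add: clin_scaleC[OF As_pow_clin] QK_scaleC)
lemma Wc_K: "As (Wc x n) = 0" unfolding Wc_def by (rule QK_K)

lemma tele: "(\<Sum>n<N. (norm (Wc x n))\<^sup>2) = (norm x)\<^sup>2 - (norm ((As ^^ N) x))\<^sup>2"
proof (induction N)
  case 0 then show ?case by simp
next
  case (Suc N)
  have h: "(norm ((As ^^ N) x))\<^sup>2 = (norm (Wc x N))\<^sup>2 + (norm ((As ^^ Suc N) x))\<^sup>2"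
    unfolding Wc_def QK_def pow_Suc_app by (rule norm_split[OF iV])
  have s: "(\<Sum>n<Suc N. (norm (Wc x n))\<^sup>2) = (\<Sum>n<N. (norm (Wc x n))\<^sup>2) + (norm (Wc x N))\<^sup>2"
    by (rule sum.lessThan_Suc)
  show ?case unfolding s Suc.IH using h by linarith
qed

lemma decay:
  assumes xH: "x \<in> Hp"
  shows "(\<lambda>N. (norm ((As ^^ N) x))\<^sup>2) \<longlonglongrightarrow> 0"
proof -
  define a where "a N = (norm ((As ^^ N) x))\<^sup>2" for N
  define z where "z N = (VV ^^ N) ((As ^^ N) x)" for N
  have adec: "decseq a"
  proof (rule decseq_SucI)
    fix N
    have "(norm ((As ^^ N) x))\<^sup>2 = (norm (Wc x N))\<^sup>2 + (norm ((As ^^ Suc N) x))\<^sup>2"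
      unfolding Wc_def QK_def pow_Suc_app by (rule norm_split[OF iV])
    then show "a (Suc N) \<le> a N" unfolding a_def by simp
  qed
  obtain L where L: "a \<longlonglongrightarrow> L" using decseq_convergent[OF adec, of 0] unfolding a_def by auto
  have aC: "Cauchy a" using L by (rule LIMSEQ_imp_Cauchy)
  have xz: "inner x (z M) = a M" for M
  proof -
    have "inner x (z M) = inner ((As ^^ M) x) ((As ^^ M) x)" unfolding z_def by (rule pow_adj[symmetric])
    then show ?thesis unfolding a_def by (simp only: power2_norm_eq_inner)
  qed
  have zz: "inner (z N) (z M) = a M" if NM: "N \<le> M" for N M
  proof -
    obtain d where d: "M = N + d" using le_Suc_ex[OF NM] by blast
    have zM: "z M = (VV ^^ N) ((VV ^^ d) ((As ^^ M) x))" unfolding z_def d by (simp only: funpow_add comp_apply)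
    have "inner (z N) (z M) = inner ((VV ^^ N) ((As ^^ N) x)) ((VV ^^ N) ((VV ^^ d) ((As ^^ M) x)))"
      by (subst zM) (simp only: z_def)
    also have "\<dots> = inner ((As ^^ N) x) ((VV ^^ d) ((As ^^ M) x))" by (rule iso_inner[OF pow_iso])
    also have "\<dots> = inner ((As ^^ d) ((As ^^ N) x)) ((As ^^ M) x)" by (rule pow_adj[symmetric])
    also have "(As ^^ d) ((As ^^ N) x) = (As ^^ M) x"
    proof -
      have "(As ^^ (d + N)) x = (As ^^ d) ((As ^^ N) x)" by (simp only: funpow_add comp_apply)
      then show ?thesis unfolding d by (simp only: add.commute)
    qed
    finally show ?thesis unfolding a_def by (simp only: power2_norm_eq_inner)
  qed
  have nz: "(norm (z N))\<^sup>2 = a N" for N unfolding z_def a_def by (simp add: iso_norm[OF pow_iso])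
  have dz: "(dist (z N) (z M))\<^sup>2 = a N - a M" if "N \<le> M" for N M
  proof -
    have "(dist (z N) (z M))\<^sup>2 = inner (z N - z M) (z N - z M)" by (simp add: dist_norm power2_norm_eq_inner)
    also have "\<dots> = (norm (z N))\<^sup>2 - 2 * inner (z N) (z M) + (norm (z M))\<^sup>2"
      by (simp add: inner_diff_left inner_diff_right inner_commute power2_norm_eq_inner)
    finally show ?thesis using zz[OF that] nz by simp
  qed
  have "Cauchy z"
  proof (rule metric_CauchyI)
    fix e :: real assume e: "0 < e"
    have e2: "0 < e\<^sup>2" using e by simp
    obtain K where K0: "\<forall>N\<ge>K. \<forall>M\<ge>K. dist (a N) (a M) < e\<^sup>2"
      using aC e2 unfolding Cauchy_def by blast
    then have K: "\<And>N M. N \<ge> K \<Longrightarrow> M \<ge> K \<Longrightarrow> dist (a N) (a M) < e\<^sup>2" by blast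
    show "\<exists>K. \<forall>N\<ge>K. \<forall>M\<ge>K. dist (z N) (z M) < e"
    proof (intro exI allI impI)
      fix N M assume N: "K \<le> N" and M: "K \<le> M"
      have "(dist (z N) (z M))\<^sup>2 < e\<^sup>2"
      proof (cases "N \<le> M")
        case True
        then show ?thesis using dz[OF True] K[OF N M] by (simp add: dist_real_def)
      next
        case False
        then have "M \<le> N" by simp
        then show ?thesis using dz[of M N] K[OF M N] by (simp add: dist_real_def dist_commute)
      qed
      then show "dist (z N) (z M) < e" using e power2_less_imp_less by fastforce
    qed
  qed
  then obtain zi where zi: "z \<longlonglongrightarrow> zi" using Cauchy_convergent_iff convergent_def by blast
  have "zi \<in> range (VV ^^ N)" for N
  proof -
    have lim: "(\<lambda>k. z (k + N)) \<longlonglongrightarrow> zi" using zi by (rule LIMSEQ_ignore_initial_segment)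
    have r: "z (k + N) \<in> range (VV ^^ N)" for k
    proof -
      have "z (k + N) = (VV ^^ N) ((VV ^^ k) ((As ^^ (k + N)) x))"
        unfolding z_def by (simp add: funpow_add add.commute)
      then show ?thesis by simp
    qed
    show ?thesis
      by (rule closed_sequentially[OF iso_range_closed[OF pow_iso[of N]], of "\<lambda>k. z (k + N)" zi])
        (use r lim in auto)
  qed
  then have "zi \<in> Hu" unfolding Hu_def by blast
  then have "inner x zi = 0" using xH unfolding Hp_def ocomp_def by blast
  moreover have "(\<lambda>M. inner x (z M)) \<longlonglongrightarrow> inner x zi" by (intro tendsto_intros zi)
  ultimately have "(\<lambda>M. a M) \<longlonglongrightarrow> 0" using xz by simp
  then show ?thesis unfolding a_def by simp
qed

lemma Wc_sums: "x \<in> Hp \<Longrightarrow> (\<lambda>n. (norm (Wc x n))\<^sup>2) sums (norm x)\<^sup>2"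
proof -
  assume x: "x \<in> Hp"
  have "(\<lambda>N. (norm x)\<^sup>2 - (norm ((As ^^ N) x))\<^sup>2) \<longlonglongrightarrow> (norm x)\<^sup>2 - 0"
    by (intro tendsto_intros decay[OF x])
  then show ?thesis unfolding sums_def tele by simp
qed

lemma Wc_l2: "x \<in> Hp \<Longrightarrow> l2norm (Wc x) = norm x"
  unfolding l2norm_def using Wc_sums sums_unique by (metis norm_ge_zero real_sqrt_abs real_sqrt_unique)

lemma Wc_hardy: "x \<in> Hp \<Longrightarrow> Wc x \<in> hardy2 (ker_op As)"
  unfolding hardy2_def ker_op_def using Wc_K Wc_sums sums_summable by blast

lemma Wc_inj: "inj_on Wc Hp"
proof (rule inj_onI)
  fix x y assume x: "x \<in> Hp" and y: "y \<in> Hp" and e: "Wc x = Wc y"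
  have d: "x - y \<in> Hp" using x y Hp_cs csubspace_diff unfolding closed_csubspace_def by blast
  have "Wc (x - y) n = 0" for n using e by (simp add: Wc_diff)
  then have "(\<lambda>n. 0::real) sums (norm (x - y))\<^sup>2" using Wc_sums[OF d] by simp
  then have "(norm (x - y))\<^sup>2 = 0" using sums_unique2[OF _ sums_zero] by blast
  then show "x = y" by simp
qed

end

instance chilbert_space \<subseteq> banach ..

context cpair begin

lemma Hu_pow_As: assumes h: "h \<in> Hu" shows "(As ^^ n) h \<in> Hu"
proof (induction n)
  case 0 show ?case using h by simp
next
  case (Suc n)
  show ?case by (simp only: pow_Suc_app) (rule Hu_As[OF Suc.IH])
qed

lemma QK_Hu: "h \<in> Hu \<Longrightarrow> QK h = 0"
proof -
  assume "h \<in> Hu"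
  then obtain y where "h = (VV ^^ Suc 0) y" unfolding Hu_iff by blast
  then have "h = VV ((VV ^^ 0) y)" by (simp only: pow_Suc_app)
  then show ?thesis by (simp only: QK_VV)
qed

lemma Wc_Hu: "h \<in> Hu \<Longrightarrow> Wc h n = 0"
  unfolding Wc_def by (rule QK_Hu[OF Hu_pow_As])

lemma orthg:
  assumes fK: "\<And>m. As (f m) = 0" and jk: "j < k"
  shows "inner ((VV ^^ j) (f j)) ((VV ^^ k) (f k)) = 0"
proof -
  obtain d where "k = Suc (j + d)" using less_imp_Suc_add[OF jk] by blast
  then have d: "k = j + Suc d" by simp
  have "(VV ^^ k) (f k) = (VV ^^ j) (VV ((VV ^^ d) (f k)))"
    unfolding d by (simp only: funpow_add comp_apply pow_Suc_app)
  then have "inner ((VV ^^ j) (f j)) ((VV ^^ k) (f k)) = inner (f j) (VV ((VV ^^ d) (f k)))"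
    by (simp only: iso_inner[OF pow_iso])
  also have "\<dots> = 0" by (rule ker_adjD[OF iV fK])
  finally show ?thesis .
qed

lemma norm_block:
  assumes fK: "\<And>m. As (f m) = 0"
  shows "(norm (\<Sum>k\<in>{m..<n}. (VV ^^ k) (f k)))\<^sup>2 = (\<Sum>k\<in>{m..<n}. (norm (f k))\<^sup>2)"
proof (induction n)
  case 0 then show ?case by simp
next
  case (Suc n)
  show ?case
  proof (cases "m \<le> n")
    case False
    then show ?thesis by simp
  next
    case True
    have e: "{m..<Suc n} = insert n {m..<n}" using True by auto
    let ?S = "\<Sum>k\<in>{m..<n}. (VV ^^ k) (f k)"
    have o: "inner ?S ((VV ^^ n) (f n)) = 0"
      unfolding inner_sum_left by (rule sum.neutral) (intro ballI orthg[OF fK], simp)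
    have "(norm (\<Sum>k\<in>{m..<Suc n}. (VV ^^ k) (f k)))\<^sup>2 = (norm ((VV ^^ n) (f n) + ?S))\<^sup>2"
      unfolding e by simp
    also have "\<dots> = (norm ((VV ^^ n) (f n)))\<^sup>2 + (norm ?S)\<^sup>2"
    proof (rule norm_add_Pythagorean)
      have "inner ((VV ^^ n) (f n)) ?S = inner ?S ((VV ^^ n) (f n))" by (rule inner_commute)
      then show "orthogonal ((VV ^^ n) (f n)) ?S" unfolding orthogonal_def using o by simp
    qed
    also have "\<dots> = (norm (f n))\<^sup>2 + (\<Sum>k\<in>{m..<n}. (norm (f k))\<^sup>2)"
      by (simp only: Suc.IH iso_norm[OF pow_iso])
    also have "\<dots> = (\<Sum>k\<in>{m..<Suc n}. (norm (f k))\<^sup>2)" unfolding e by simp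
    finally show ?thesis .
  qed
qed

lemma g_summable:
  assumes fK: "\<And>m. As (f m) = 0" and fs: "summable (\<lambda>k. (norm (f k))\<^sup>2)"
  shows "summable (\<lambda>k. (VV ^^ k) (f k))"
  unfolding summable_Cauchy
proof (intro allI impI)
  fix e :: real assume e: "0 < e"
  then have e2: "0 < e\<^sup>2" by simp
  obtain N where N: "\<forall>m\<ge>N. \<forall>n. norm (\<Sum>k\<in>{m..<n}. (norm (f k))\<^sup>2) < e\<^sup>2"
    using fs e2 unfolding summable_Cauchy by blast
  show "\<exists>N. \<forall>m\<ge>N. \<forall>n. norm (\<Sum>k\<in>{m..<n}. (VV ^^ k) (f k)) < e"
  proof (intro exI allI impI)
    fix m n assume m: "N \<le> m"
    have "(norm (\<Sum>k\<in>{m..<n}. (VV ^^ k) (f k)))\<^sup>2 = (\<Sum>k\<in>{m..<n}. (norm (f k))\<^sup>2)"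
      by (rule norm_block[OF fK])
    also have "\<dots> \<le> norm (\<Sum>k\<in>{m..<n}. (norm (f k))\<^sup>2)" by simp
    also have "\<dots> < e\<^sup>2" using N m by blast
    finally show "norm (\<Sum>k\<in>{m..<n}. (VV ^^ k) (f k)) < e" using e power2_less_imp_less by fastforce
  qed
qed

lemma As_pow_bl: "bounded_linear (\<lambda>y. (As ^^ n) y)"
proof (induction n)
  case 0 show ?case by simp
next
  case (Suc n) show ?case by (simp only: pow_Suc_app) (rule bounded_linear_compose[OF adj_bl[OF iV] Suc.IH])
qed

lemma QK_bl: "bounded_linear QK"
proof -
  have "bounded_linear (\<lambda>z. z - VV (As z))"
    by (intro bounded_linear_sub bounded_linear_ident bounded_linear_compose[OF iso_bl[OF iV] adj_bl[OF iV]])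
  moreover have "QK = (\<lambda>z. z - VV (As z))" unfolding QK_def by (rule ext) (rule refl)
  ultimately show ?thesis by simp
qed

lemma L_term:
  assumes fK: "\<And>m. As (f m) = 0"
  shows "QK ((As ^^ n) ((VV ^^ m) (f m))) = (if m = n then f n else 0)"
proof (cases "m = n")
  case True then show ?thesis by (simp add: As_pow_VV QK_ker fK)
next
  case False
  show ?thesis
  proof (cases "n < m")
    case True
    obtain d where "m = Suc (n + d)" using less_imp_Suc_add[OF True] by blast
    then have d: "m = n + Suc d" by simp
    have "(VV ^^ m) (f m) = (VV ^^ n) (VV ((VV ^^ d) (f m)))"
      unfolding d by (simp only: funpow_add comp_apply pow_Suc_app)
    then have "(As ^^ n) ((VV ^^ m) (f m)) = VV ((VV ^^ d) (f m))" by (simp only: As_pow_VV)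
    then show ?thesis using False by (simp add: QK_VV del: comp_apply)
  next
    case False2: False
    then have "m < n" using False by simp
    then obtain d where "n = Suc (m + d)" using less_imp_Suc_add by blast
    then have d: "n = Suc d + m" by simp
    have "(As ^^ n) ((VV ^^ m) (f m)) = (As ^^ Suc d) ((As ^^ m) ((VV ^^ m) (f m)))"
      unfolding d by (simp only: funpow_add comp_apply)
    also have "\<dots> = (As ^^ d) (As (f m))" by (simp only: As_pow_VV pow_Suc_app')
    also have "\<dots> = 0" by (simp only: fK As_pow_zero)
    finally show ?thesis using False by (simp add: QK_zero)
  qed
qed

lemma Wc_series:
  assumes fK: "\<And>m. As (f m) = 0" and gs: "(\<lambda>k. (VV ^^ k) (f k)) sums s"
  shows "Wc s n = f n"
proof -
  have bl: "bounded_linear (\<lambda>y. QK ((As ^^ n) y))"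
    by (rule bounded_linear_compose[OF QK_bl As_pow_bl])
  have "(\<lambda>m. QK ((As ^^ n) ((VV ^^ m) (f m)))) sums QK ((As ^^ n) s)"
    by (rule bounded_linear.sums[OF bl gs])
  moreover have "(\<lambda>m. QK ((As ^^ n) ((VV ^^ m) (f m)))) = (\<lambda>m. if m = n then f n else 0)"
    by (rule ext) (rule L_term[OF fK])
  ultimately have "(\<lambda>m. if m = n then f n else 0) sums Wc s n" unfolding Wc_def by simp
  moreover have "(\<lambda>m. if m = n then f n else 0) sums (\<Sum>m\<in>{n}. if m = n then f n else 0)"
    by (rule sums_finite) auto
  ultimately show ?thesis using sums_unique2 by fastforce
qed

lemma Wc_surj: "hardy2 (ker_op As) \<subseteq> Wc ` Hp"
proof
  fix f assume "f \<in> hardy2 (ker_op As)"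
  then have fK: "\<And>m. As (f m) = 0" and fs: "summable (\<lambda>k. (norm (f k))\<^sup>2)"
    unfolding hardy2_def ker_op_def by auto
  define s where "s = (\<Sum>k. (VV ^^ k) (f k))"
  have gs: "(\<lambda>k. (VV ^^ k) (f k)) sums s" unfolding s_def using g_summable[OF fK fs] summable_sums by blast
  obtain sp su where d: "sp \<in> Hp" "su \<in> Hu" "s = sp + su" using sHpu unfolding ssum_def by blast
  have "Wc sp n = f n" for n
    using Wc_series[OF fK gs, of n] d by (simp add: Wc_add Wc_Hu)
  then have "Wc sp = f" by (rule ext)
  then show "f \<in> Wc ` Hp" using d(1) by blast
qed

end

context cpair begin

definition "Pc e = V2 (adj V2 e)"
definition "Uc e = V2 (e - V1 (adj V1 e)) + adj V1 e"

lemma c1: "As (V1 y) = adj V2 y" by (simp only: adjV adj_VV[OF i1])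
lemma c2: "As (V2 y) = adj V1 y" by (simp only: adjV' adj_VV[OF i2])
lemma c3: "As (adj V2 z) = adj V2 (As z)" by (simp only: adjV adjV' adj_comm)
lemma c4: "As (adj V1 z) = adj V1 (As z)" by (simp only: adjV adjV' adj_comm)
lemma c3p: "(As ^^ m) (adj V2 z) = adj V2 ((As ^^ m) z)"
proof (induction m)
  case (Suc m) show ?case by (simp only: pow_Suc_app Suc.IH c3)
qed simp
lemma c4p: "(As ^^ m) (adj V1 z) = adj V1 ((As ^^ m) z)"
proof (induction m)
  case (Suc m) show ?case by (simp only: pow_Suc_app Suc.IH c4)
qed simp
lemma aV2_VV: "adj V2 (VV w) = V1 w"
proof -
  have "VV w = V2 (V1 w)" by (simp add: comm_pt)
  then show ?thesis by (simp only: adj_VV[OF i2])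
qed
lemma aV1_VV: "adj V1 (VV w) = V2 w"
proof -
  have "VV w = V1 (V2 w)" by simp
  then show ?thesis by (simp only: adj_VV[OF i1])
qed

lemma l1: "clinear V1" by (rule iso_clin[OF i1])
lemma l2: "clinear V2" by (rule iso_clin[OF i2])
lemma lV: "clinear VV" by (rule iso_clin[OF iV])

lemma QK_V1: "QK (V1 y) = QK (V1 (QK y))"
proof -
  have "V1 y = V1 (QK y) + VV (V1 (As y))"
    by (subst QK_decomp[of y]) (simp only: clin_add[OF l1] V1_VV)
  then have "QK (V1 y) = QK (V1 (QK y)) + QK (VV (V1 (As y)))" by (simp only: QK_add)
  then show ?thesis by (simp only: QK_VV add_0_right)
qed
lemma QK_V2: "QK (V2 y) = QK (V2 (QK y))"
proof -
  have "V2 y = V2 (QK y) + VV (V2 (As y))"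
    by (subst QK_decomp[of y]) (simp only: clin_add[OF l2] V2_VV)
  then have "QK (V2 y) = QK (V2 (QK y)) + QK (VV (V2 (As y)))" by (simp only: QK_add)
  then show ?thesis by (simp only: QK_VV add_0_right)
qed
lemma QK_aV2: "QK (adj V2 y) = QK (adj V2 (QK y)) + QK (V1 (QK (As y)))"
proof -
  have "adj V2 y = adj V2 (QK y) + V1 (As y)"
    by (subst QK_decomp[of y]) (simp only: adj_add[OF i2] aV2_VV)
  then show ?thesis by (simp only: QK_add QK_V1[of "As y"])
qed
lemma QK_aV1: "QK (adj V1 y) = QK (adj V1 (QK y)) + QK (V2 (QK (As y)))"
proof -
  have "adj V1 y = adj V1 (QK y) + V2 (As y)"
    by (subst QK_decomp[of y]) (simp only: adj_add[OF i1] aV1_VV)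
  then show ?thesis by (simp only: QK_add QK_V2[of "As y"])
qed

lemma Wc1_0: "Wc (V1 x) 0 = QK (V1 (Wc x 0))"
  unfolding Wc_def by (simp only: funpow_0 QK_V1[of x])
lemma Wc2_0: "Wc (V2 x) 0 = QK (V2 (Wc x 0))"
  unfolding Wc_def by (simp only: funpow_0 QK_V2[of x])
lemma Wc1_S: "Wc (V1 x) (Suc m) = QK (adj V2 (Wc x m)) + QK (V1 (Wc x (Suc m)))"
proof -
  have e: "(As ^^ Suc m) (V1 x) = adj V2 ((As ^^ m) x)" by (simp only: pow_Suc_app' c1 c3p)
  have "Wc (V1 x) (Suc m) = QK (adj V2 ((As ^^ m) x))" unfolding Wc_def e by (rule refl)
  also have "\<dots> = QK (adj V2 (QK ((As ^^ m) x))) + QK (V1 (QK (As ((As ^^ m) x))))" by (rule QK_aV2)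
  also have "As ((As ^^ m) x) = (As ^^ Suc m) x" by (rule pow_Suc_app[symmetric])
  finally show ?thesis unfolding Wc_def .
qed
lemma Wc2_S: "Wc (V2 x) (Suc m) = QK (adj V1 (Wc x m)) + QK (V2 (Wc x (Suc m)))"
proof -
  have e: "(As ^^ Suc m) (V2 x) = adj V1 ((As ^^ m) x)" by (simp only: pow_Suc_app' c2 c4p)
  have "Wc (V2 x) (Suc m) = QK (adj V1 ((As ^^ m) x))" unfolding Wc_def e by (rule refl)
  also have "\<dots> = QK (adj V1 (QK ((As ^^ m) x))) + QK (V2 (QK (As ((As ^^ m) x))))" by (rule QK_aV1)
  also have "As ((As ^^ m) x) = (As ^^ Suc m) x" by (rule pow_Suc_app[symmetric])
  finally show ?thesis unfolding Wc_def .
qed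

lemma v1: "As a = 0 \<Longrightarrow> Uc (QK (V1 a)) = a - Pc a"
proof -
  define q where "q = a - V2 (adj V2 a)"
  have "QK (V1 a) = V1 a - VV (adj V2 a)" unfolding QK_def by (simp only: c1)
  also have "\<dots> = V1 q" unfolding q_def by (simp add: clin_diff[OF l1])
  finally have e: "QK (V1 a) = V1 q" .
  have "Uc (V1 q) = q" unfolding Uc_def by (simp add: adj_VV[OF i1] clin_zero[OF l2])
  then show ?thesis using e unfolding q_def Pc_def by simp
qed

lemma v2: "As a = 0 \<Longrightarrow> QK (adj V2 a) = adj V2 a \<and> Uc (adj V2 a) = Pc a"
proof -
  assume a: "As a = 0"
  have "As (adj V2 a) = 0" by (simp only: c3 a adj_zero[OF i2])
  moreover have "adj V1 (adj V2 a) = 0" using a by (simp only: adjV')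
  ultimately show ?thesis unfolding Uc_def Pc_def
    by (simp add: QK_ker clin_zero[OF l1])
qed

lemma PcUc: "As a = 0 \<Longrightarrow> Pc (Uc a) = V2 (a - V1 (adj V1 a))"
proof -
  assume a: "As a = 0"
  have "adj V2 (adj V1 a) = 0" using a by (simp only: adjV)
  then show ?thesis unfolding Pc_def Uc_def by (simp add: adj_add[OF i2] adj_VV[OF i2])
qed

lemma v3: "As a = 0 \<Longrightarrow> QK (V2 a) = Pc (Uc a)"
proof -
  assume a: "As a = 0"
  have "QK (V2 a) = V2 a - VV (adj V1 a)" unfolding QK_def by (simp only: c2)
  also have "VV (adj V1 a) = V2 (V1 (adj V1 a))" by (simp add: comm_pt)
  finally show ?thesis using PcUc[OF a] by (simp add: clin_diff[OF l2])
qed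

lemma v4: "As a = 0 \<Longrightarrow> QK (adj V1 a) = Uc a - Pc (Uc a)"
proof -
  assume a: "As a = 0"
  have "As (adj V1 a) = 0" by (simp only: c4 a adj_zero[OF i1])
  then have "QK (adj V1 a) = adj V1 a" by (rule QK_ker)
  then show ?thesis using PcUc[OF a] unfolding Uc_def by simp
qed

lemma K_iff: "x \<in> ker_op As \<longleftrightarrow> As x = 0" by (simp add: ker_op_def)

lemma K_cs: "closed_csubspace (ker_op As)"
  unfolding ker_adj[OF iV] by (rule ocomp_cs[OF range_cs[OF lV]])

lemma Kcs: "csubspace (ker_op As)" using K_cs unfolding closed_csubspace_def by blast

lemma Pc_K: "As e = 0 \<Longrightarrow> As (Pc e) = 0"
  unfolding Pc_def by (simp only: c2 adjV'[symmetric])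

lemma Pc_proj: "orth_proj_on (ker_op As) Pc"
  unfolding orth_proj_on_def
proof (intro conjI ballI)
  fix x assume "x \<in> ker_op As" then show "Pc x \<in> ker_op As" using Pc_K K_iff by blast
next
  show "clinear_on (ker_op As) Pc"
    by (rule clin_on_sub) (simp add: clinear_on_def Pc_def clin_add[OF l2] adj_add[OF i2]
        clin_scaleC[OF l2] adj_scaleC[OF i2])
next
  fix x show "Pc (Pc x) = Pc x" unfolding Pc_def by (simp only: adj_VV[OF i2])
next
  fix x y
  have "inner (Pc x) y = inner (adj V2 y) (adj V2 x)"
    unfolding Pc_def using adj_char[OF i2, of y "adj V2 x"] by (simp add: inner_commute)
  moreover have "inner x (Pc y) = inner (adj V2 x) (adj V2 y)"
    unfolding Pc_def using adj_char[OF i2, of x "adj V2 y"] by simp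
  ultimately show "inner (Pc x) y = inner x (Pc y)" by (simp add: inner_commute)
qed

lemma Uc_clin: "clinear Uc"
  unfolding clinear_on_def Uc_def
  by (simp add: clin_add[OF l2] clin_add[OF l1] adj_add[OF i1] clin_scaleC[OF l2] clin_scaleC[OF l1]
      adj_scaleC[OF i1] clin_diff[OF l1] clin_diff[OF l2] scaleC_add_right scaleC_diff_right algebra_simps)

lemma Uc_K: "As e = 0 \<Longrightarrow> As (Uc e) = 0"
proof -
  assume e: "As e = 0"
  have "As (V2 (e - V1 (adj V1 e))) = 0" by (simp only: c2 QV_ker[OF i1])
  moreover have "As (adj V1 e) = 0" by (simp only: c4 e adj_zero[OF i1])
  ultimately show ?thesis unfolding Uc_def by (simp add: adj_add[OF iV] del: comp_apply)
qed

lemma Uc_norm: "As e = 0 \<Longrightarrow> norm (Uc e) = norm e"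
proof -
  assume e: "As e = 0"
  define q where "q = e - V1 (adj V1 e)"
  have o: "inner (V2 q) (adj V1 e) = 0"
  proof -
    have "inner (V2 q) (adj V1 e) = inner (adj V2 (adj V1 e)) q"
      using adj_char[OF i2, of "adj V1 e" q] by (simp add: inner_commute)
    also have "adj V2 (adj V1 e) = 0" using e by (simp only: adjV)
    finally show ?thesis by simp
  qed
  have "(norm (Uc e))\<^sup>2 = (norm (V2 q))\<^sup>2 + (norm (adj V1 e))\<^sup>2"
    unfolding Uc_def q_def[symmetric] by (rule norm_add_Pythagorean) (simp add: orthogonal_def o)
  also have "\<dots> = (norm e)\<^sup>2" unfolding q_def iso_norm[OF i2] by (rule norm_split[OF i1, symmetric])
  finally show ?thesis by simp
qed

lemma Uc_onto: "As y = 0 \<Longrightarrow> \<exists>x. As x = 0 \<and> Uc x = y"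
proof -
  assume y: "As y = 0"
  define q2 where "q2 = y - V2 (adj V2 y)"
  define x where "x = adj V2 y + V1 q2"
  have q2K: "adj V2 q2 = 0" unfolding q2_def by (rule QV_ker[OF i2])
  have a1: "adj V1 x = q2"
    unfolding x_def using y by (simp add: adj_add[OF i1] adj_VV[OF i1] adjV'[symmetric])
  have "x - V1 (adj V1 x) = x - V1 q2" by (simp only: a1)
  also have "\<dots> = adj V2 y" unfolding x_def by simp
  finally have "x - V1 (adj V1 x) = adj V2 y" .
  then have "Uc x = y" unfolding Uc_def a1 q2_def by simp
  moreover have "As x = 0"
  proof -
    have "As (adj V2 y) = 0" by (simp only: c3 y adj_zero[OF i2])
    moreover have "As (V1 q2) = 0" by (simp only: c1 q2K)
    ultimately show ?thesis unfolding x_def by (simp add: adj_add[OF iV] del: comp_apply)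
  qed
  ultimately show ?thesis by blast
qed

lemma Uc_unitary: "unitary_on (ker_op As) Uc"
  unfolding unitary_on_def
proof (intro conjI ballI)
  show "clinear_on (ker_op As) Uc" by (rule clin_on_sub[OF Uc_clin])
  show "Uc ` ker_op As = ker_op As"
  proof
    show "Uc ` ker_op As \<subseteq> ker_op As" using Uc_K K_iff by blast
    show "ker_op As \<subseteq> Uc ` ker_op As"
    proof
      fix y assume "y \<in> ker_op As"
      then obtain x where "As x = 0" "Uc x = y" using Uc_onto K_iff by blast
      then show "y \<in> Uc ` ker_op As" using K_iff by blast
    qed
  qed
  fix x assume "x \<in> ker_op As" then show "norm (Uc x) = norm x" using Uc_norm K_iff by blast
qed

lemma W2_eq: "Wc (V2 x) = M_phi2 (ker_op As) Pc Uc (Wc x)"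
proof
  fix n show "Wc (V2 x) n = M_phi2 (ker_op As) Pc Uc (Wc x) n"
  proof (cases n)
    case 0
    have "M_phi2 (ker_op As) Pc Uc (Wc x) n = Pc (Uc (Wc x 0))" unfolding M_phi2_def 0 by simp
    moreover have "Wc (V2 x) n = Pc (Uc (Wc x 0))" unfolding 0 Wc2_0 by (rule v3[OF Wc_K])
    ultimately show ?thesis by simp
  next
    case (Suc m)
    have "M_phi2 (ker_op As) Pc Uc (Wc x) n = Pc (Uc (Wc x (Suc m))) + (Uc (Wc x m) - Pc (Uc (Wc x m)))"
      unfolding M_phi2_def Suc by simp
    moreover have "Wc (V2 x) n = (Uc (Wc x m) - Pc (Uc (Wc x m))) + Pc (Uc (Wc x (Suc m)))"
      unfolding Suc Wc2_S by (simp only: v3[OF Wc_K] v4[OF Wc_K])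
    ultimately show ?thesis by (simp only: add.commute)
  qed
qed

lemma W1_eq: "Wc (V1 x) = M_phi1 (ker_op As) Pc Uc (Wc x)"
proof
  fix n
  have w: "Wc (V1 x) n \<in> ker_op As" using Wc_K K_iff by blast
  have "Uc (Wc (V1 x) n) = (Wc x n - Pc (Wc x n)) + (case n of 0 \<Rightarrow> 0 | Suc m \<Rightarrow> Pc (Wc x m))"
  proof (cases n)
    case 0
    have "Uc (Wc (V1 x) n) = Wc x 0 - Pc (Wc x 0)" unfolding 0 Wc1_0 by (rule v1[OF Wc_K])
    then show ?thesis unfolding 0 by simp
  next
    case (Suc m)
    have a: "QK (adj V2 (Wc x m)) \<in> ker_op As" using QK_K K_iff by blast
    have b: "QK (V1 (Wc x (Suc m))) \<in> ker_op As" using QK_K K_iff by blast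
    have "Uc (Wc (V1 x) n) = Uc (QK (adj V2 (Wc x m))) + Uc (QK (V1 (Wc x (Suc m))))"
      unfolding Suc Wc1_S by (rule U_add[OF Kcs Uc_unitary a b])
    also have "\<dots> = Pc (Wc x m) + (Wc x (Suc m) - Pc (Wc x (Suc m)))"
      using v2[OF Wc_K, of x m] v1[OF Wc_K, of x "Suc m"] by simp
    finally show ?thesis using Suc by (simp add: algebra_simps)
  qed
  then have "adj_on (ker_op As) Uc ((Wc x n - Pc (Wc x n)) + (case n of 0 \<Rightarrow> 0 | Suc m \<Rightarrow> Pc (Wc x m)))
      = Wc (V1 x) n"
    using Uadj_U[OF Kcs Uc_unitary w] by simp
  then show "Wc (V1 x) n = M_phi1 (ker_op As) Pc Uc (Wc x) n" unfolding M_phi1_def by simp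
qed

lemma triple: "is_BCL_triple V1 V2 (ker_op As) Pc Uc"
proof -
  have f1: "Wc ` Hp = hardy2 (ker_op As)" using Wc_hardy Wc_surj by blast
  have f2: "\<forall>x\<in>Hp. \<forall>y\<in>Hp. Wc (x + y) = (\<lambda>n. Wc x n + Wc y n)" by (intro ballI ext) (rule Wc_add)
  have f3: "\<forall>c. \<forall>x\<in>Hp. Wc (scaleC c x) = (\<lambda>n. scaleC c (Wc x n))" by (intro allI ballI ext) (rule Wc_scaleC)
  have f4: "\<forall>x\<in>Hp. l2norm (Wc x) = norm x" by (simp add: Wc_l2)
  have f5: "\<forall>x\<in>Hp. Wc (V1 x) = M_phi1 (ker_op As) Pc Uc (Wc x)" by (simp add: W1_eq)
  have f6: "\<forall>x\<in>Hp. Wc (V2 x) = M_phi2 (ker_op As) Pc Uc (Wc x)" by (simp add: W2_eq)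
  show ?thesis unfolding is_BCL_triple_def
    using K_cs Pc_proj Uc_unitary Hp_cs Hu_cs oHpu sHpu Hp_red1 Hp_red2 Hu_red1 Hu_red2 Hu_un1 Hu_un2
      f1 Wc_inj f2 f3 f4 f5 f6
    apply -
    apply (rule conjI, assumption, rule conjI, assumption, rule conjI, assumption,
        rule exI[of _ Hp], rule exI[of _ Hu], rule exI[of _ Wc], intro conjI; assumption)
    done
qed

lemma g_bwd:
  assumes R: "reducing_on (ker_op As) (Pc ` ker_op As) Uc"
  shows "V2 ` ker_op (adj V1) = ker_op (adj V1)"
proof -
  have R1: "Uc p \<in> Pc ` ker_op As" if "p \<in> Pc ` ker_op As" for p
    using R that unfolding reducing_on_def by blast
  have R2: "adj_on (ker_op As) Uc p \<in> Pc ` ker_op As" if "p \<in> Pc ` ker_op As" for p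
    using R that unfolding reducing_on_def by blast
  have inR: "p \<in> Pc ` ker_op As" if p1: "As p = 0" and p2: "Pc p = p" for p
  proof -
    have "p \<in> ker_op As" using p1 by (simp add: K_iff)
    then have "Pc p \<in> Pc ` ker_op As" by (rule imageI)
    then show ?thesis by (simp only: p2)
  qed
  have RP: "Pc p = p" if pR: "p \<in> Pc ` ker_op As" for p
  proof -
    obtain e where e: "p = Pc e" using pR by blast
    show ?thesis unfolding e Pc_def by (simp only: adj_VV[OF i2])
  qed
  have V2k1: "As (V2 k) = 0" if k: "adj V1 k = 0" for k
    by (simp only: c2 k)
  have V2k2: "Pc (V2 k) = V2 k" for k
    unfolding Pc_def by (simp only: adj_VV[OF i2])
  show ?thesis
  proof
    show "ker_op (adj V1) \<subseteq> V2 ` ker_op (adj V1)"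
    proof
      fix k assume "k \<in> ker_op (adj V1)"
      then have k: "adj V1 k = 0" by (simp add: K1_iff)
      have kK: "As k = 0" by (simp only: adjV k adj_zero[OF i2])
      have kK': "k \<in> ker_op As" using kK by (simp add: K_iff)
      have Uk: "Uc k = V2 k" unfolding Uc_def k by (simp add: clin_zero[OF l1])
      have "V2 k \<in> Pc ` ker_op As" by (rule inR[OF V2k1[OF k] V2k2])
      then have a: "adj_on (ker_op As) Uc (V2 k) \<in> Pc ` ker_op As" by (rule R2)
      have "adj_on (ker_op As) Uc (Uc k) = k" by (rule Uadj_U[OF Kcs Uc_unitary kK'])
      then have "adj_on (ker_op As) Uc (V2 k) = k" by (simp only: Uk)
      then have "k \<in> Pc ` ker_op As" using a by simp
      then have "Pc k = k" by (rule RP)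
      then have "k = V2 (adj V2 k)" unfolding Pc_def by simp
      moreover have "adj V2 k \<in> ker_op (adj V1)" using V2adj_K1[OF k] by (simp add: K1_iff)
      ultimately show "k \<in> V2 ` ker_op (adj V1)" by (rule image_eqI)
    qed
  next
    show "V2 ` ker_op (adj V1) \<subseteq> ker_op (adj V1)"
    proof
      fix y assume "y \<in> V2 ` ker_op (adj V1)"
      then obtain k where k0: "k \<in> ker_op (adj V1)" and y: "y = V2 k" by blast
      have k: "adj V1 k = 0" using k0 by (simp add: K1_iff)
      have w: "As (V2 k) = 0" by (rule V2k1[OF k])
      have "V2 k \<in> Pc ` ker_op As" by (rule inR[OF w V2k2])
      then have "Uc (V2 k) \<in> Pc ` ker_op As" by (rule R1)
      then have "Pc (Uc (V2 k)) = Uc (V2 k)" by (rule RP)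
      then have "Uc (V2 k) = V2 (V2 k - V1 (adj V1 (V2 k)))" by (simp only: PcUc[OF w])
      moreover have "Uc (V2 k) = V2 (V2 k - V1 (adj V1 (V2 k))) + adj V1 (V2 k)" by (simp only: Uc_def)
      ultimately have "adj V1 (V2 k) = 0" by simp
      then show "y \<in> ker_op (adj V1)" using y by (simp add: K1_iff)
    qed
  qed
qed

end

lemma fringe2_eq: "fringe2 V1 V2 = fringe1 V2 V1"
  unfolding fringe1_def fringe2_def by (rule ext) (rule refl)

theorem lemma2p3:
  fixes V1 V2 :: "'a::chilbert_space \<Rightarrow> 'a"
  assumes "cisometry V1" and "cisometry V2" and "V1 \<circ> V2 = V2 \<circ> V1"
  shows
   "(defect_op V1 V2 = (\<lambda>_. 0)
       \<longleftrightarrow> reducing (ker_op (adj V2)) V1 \<and> unitary_on (ker_op (adj V2)) V1)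
  \<and> (defect_op V1 V2 = (\<lambda>_. 0)
       \<longleftrightarrow> reducing (ker_op (adj V1)) V2 \<and> unitary_on (ker_op (adj V1)) V2)
  \<and> (defect_op V1 V2 = (\<lambda>_. 0)
       \<longleftrightarrow> unitary_on (ker_op (adj V1)) (fringe1 V1 V2)
           \<and> unitary_on (ker_op (adj V2)) (fringe2 V1 V2))
  \<and> (defect_op V1 V2 = (\<lambda>_. 0)
       \<longleftrightarrow> orth_sets (ker_op (adj V1)) (ker_op (adj V2))
           \<and> ssum (ker_op (adj V1)) (ker_op (adj V2)) = ker_op (adj (V1 \<circ> V2)))
  \<and> (defect_op V1 V2 = (\<lambda>_. 0)
       \<longleftrightarrow> (let A = ominus_sp (range V1) (range (V1 \<circ> V2));
                B = ominus_sp (range V2) (range (V1 \<circ> V2));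
                C = range (V1 \<circ> V2)
            in orth_sets A B \<and> orth_sets A C \<and> orth_sets B C \<and> ssum (ssum A B) C = UNIV))
  \<and> (defect_op V1 V2 = (\<lambda>_. 0)
       \<longleftrightarrow> (\<forall>E P U. is_BCL_triple V1 V2 E P U \<longrightarrow> reducing_on E (P ` E) U))"
proof -
  interpret c: cpair V1 V2 by unfold_locales (rule assms)+
  interpret s: cpair V2 V1 by (rule c.sym)
  have a1: "defect_op V1 V2 = (\<lambda>_. 0) \<longleftrightarrow> V2 ` ker_op (adj V1) = ker_op (adj V1)" by (rule c.key1)
  have a2: "defect_op V1 V2 = (\<lambda>_. 0) \<longleftrightarrow> V1 ` ker_op (adj V2) = ker_op (adj V2)"
    using s.key1 c.defect_sym by simp
  have pb: "defect_op V1 V2 = (\<lambda>_. 0)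
       \<longleftrightarrow> reducing (ker_op (adj V2)) V1 \<and> unitary_on (ker_op (adj V2)) V1"
    using a2 s.key_c by simp
  have pc: "defect_op V1 V2 = (\<lambda>_. 0)
       \<longleftrightarrow> reducing (ker_op (adj V1)) V2 \<and> unitary_on (ker_op (adj V1)) V2"
    using a1 c.key_c by simp
  have pd: "defect_op V1 V2 = (\<lambda>_. 0)
       \<longleftrightarrow> unitary_on (ker_op (adj V1)) (fringe1 V1 V2)
           \<and> unitary_on (ker_op (adj V2)) (fringe2 V1 V2)"
    using a1 a2 c.key_d s.key_d fringe2_eq by metis
  have pe: "defect_op V1 V2 = (\<lambda>_. 0)
       \<longleftrightarrow> orth_sets (ker_op (adj V1)) (ker_op (adj V2))
           \<and> ssum (ker_op (adj V1)) (ker_op (adj V2)) = ker_op (adj (V1 \<circ> V2))"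
  proof
    assume D: "defect_op V1 V2 = (\<lambda>_. 0)"
    show "orth_sets (ker_op (adj V1)) (ker_op (adj V2))
           \<and> ssum (ker_op (adj V1)) (ker_op (adj V2)) = ker_op (adj (V1 \<circ> V2))"
      by (rule c.e_fwd) (use D a1 a2 in auto)
  next
    assume "orth_sets (ker_op (adj V1)) (ker_op (adj V2))
           \<and> ssum (ker_op (adj V1)) (ker_op (adj V2)) = ker_op (adj (V1 \<circ> V2))"
    then have "V2 ` ker_op (adj V1) = ker_op (adj V1)" using c.e_bwd by blast
    then show "defect_op V1 V2 = (\<lambda>_. 0)" using a1 by blast
  qed
  have pf: "defect_op V1 V2 = (\<lambda>_. 0)
       \<longleftrightarrow> (let A = ominus_sp (range V1) (range (V1 \<circ> V2));
                B = ominus_sp (range V2) (range (V1 \<circ> V2));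
                C = range (V1 \<circ> V2)
            in orth_sets A B \<and> orth_sets A C \<and> orth_sets B C \<and> ssum (ssum A B) C = UNIV)"
  proof
    assume D: "defect_op V1 V2 = (\<lambda>_. 0)"
    have E1: "V2 ` ker_op (adj V1) = ker_op (adj V1)" using D a1 by blast
    have E2: "V1 ` ker_op (adj V2) = ker_op (adj V2)" using D a2 by blast
    have O: "orth_sets (ker_op (adj V1)) (ker_op (adj V2))" using c.e_fwd[OF E1 E2] by blast
    show "let A = ominus_sp (range V1) (range (V1 \<circ> V2));
                B = ominus_sp (range V2) (range (V1 \<circ> V2));
                C = range (V1 \<circ> V2)
            in orth_sets A B \<and> orth_sets A C \<and> orth_sets B C \<and> ssum (ssum A B) C = UNIV"
      by (rule c.f_fwd[OF D E1 E2 O])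
  next
    assume "let A = ominus_sp (range V1) (range (V1 \<circ> V2));
                B = ominus_sp (range V2) (range (V1 \<circ> V2));
                C = range (V1 \<circ> V2)
            in orth_sets A B \<and> orth_sets A C \<and> orth_sets B C \<and> ssum (ssum A B) C = UNIV"
    then have "V2 ` ker_op (adj V1) = ker_op (adj V1)" by (rule c.f_bwd)
    then show "defect_op V1 V2 = (\<lambda>_. 0)" using a1 by blast
  qed
  have pg: "defect_op V1 V2 = (\<lambda>_. 0)
       \<longleftrightarrow> (\<forall>E P U. is_BCL_triple V1 V2 E P U \<longrightarrow> reducing_on E (P ` E) U)"
  proof
    assume D: "defect_op V1 V2 = (\<lambda>_. 0)"
    have E1: "V2 ` ker_op (adj V1) = ker_op (adj V1)" using D a1 by blast
    show "\<forall>E P U. is_BCL_triple V1 V2 E P U \<longrightarrow> reducing_on E (P ` E) U"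
    proof (intro allI impI)
      fix E P U assume T: "is_BCL_triple V1 V2 E P U"
      then obtain Hp Hu and W :: "'a \<Rightarrow> nat \<Rightarrow> 'a" where
        h: "closed_csubspace E" "orth_proj_on E P" "unitary_on E U"
        "closed_csubspace Hp" "closed_csubspace Hu" "orth_sets Hp Hu" "ssum Hp Hu = UNIV"
        "reducing Hp V1" "reducing Hp V2" "reducing Hu V1" "reducing Hu V2"
        "unitary_on Hu V1" "unitary_on Hu V2"
        "W ` Hp = hardy2 E" "inj_on W Hp"
        "\<forall>x\<in>Hp. \<forall>y\<in>Hp. W (x + y) = (\<lambda>n. W x n + W y n)"
        "\<forall>c. \<forall>x\<in>Hp. W (scaleC c x) = (\<lambda>n. scaleC c (W x n))"
        "\<forall>x\<in>Hp. l2norm (W x) = norm x"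
        "\<forall>x\<in>Hp. W (V1 x) = M_phi1 E P U (W x)"
        "\<forall>x\<in>Hp. W (V2 x) = M_phi2 E P U (W x)"
        unfolding is_BCL_triple_def by blast
      interpret b: bcl V1 V2 E P U Hp Hu W
        by (unfold_locales) (rule h)+
      show "reducing_on E (P ` E) U" by (rule b.g_fwd[OF E1])
    qed
  next
    assume "\<forall>E P U. is_BCL_triple V1 V2 E P U \<longrightarrow> reducing_on E (P ` E) U"
    then have "reducing_on (ker_op (adj (V1 \<circ> V2))) (c.Pc ` ker_op (adj (V1 \<circ> V2))) c.Uc"
      using c.triple by blast
    then have "V2 ` ker_op (adj V1) = ker_op (adj V1)" by (rule c.g_bwd)
    then show "defect_op V1 V2 = (\<lambda>_. 0)" using a1 by blast
  qed
  show ?thesis using pb pc pd pe pf pg by blast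
qed

end
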